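(* Let $n\in\mathbb{R}^+\cup\{0\}$ and let $\mathcal{J}_a^n$ be the Riemann–Liouville fractional integral operator of order $n$ on $D_{HK}$. Then: (i) $\mathcal{J}_a^n$ maps $D_{HK}$ into $D_{HK}$; (ii) $\mathcal{J}_a^n:D_{HK}\to D_{HK}$ is a bounded linear operator with respect to the Alexiewicz norm; (iii) if $(f_k)\subset D_{HK}$ converges in the Alexiewicz norm to $f\in D_{HK}$, then $(\mathcal{J}_a^nf_k)$ converges in the Alexiewicz norm to $\mathcal{J}_a^nf$; (iv) if $n\geq 1$ and $f\in D_{HK}$, then $\mathcal{J}_a^nf(x)=\frac{1}{\Gamma(n)}\lim_{k\to\infty}\int_a^x(x-t)^{n-1}f_k(t)\,dt$, the convergence holding both in $D_{HK}$ (Alexiewicz norm) and in $C[a,b]$ (uniformly on $[a,b]$), for any sequence $(f_k)\subset L^1[a,b]$ with $\|f_k-f\|_A\to 0$.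
   Context: Fix real numbers $a<b$. $\mathcal{D}(a,b)$ is the space of real $C^\infty$ functions with compact support in $(a,b)$, $\mathcal{D}'(a,b)$ the space of distributions on $(a,b)$, $D$ the distributional derivative. Let $C_0=\{F\in C[a,b]:F(a)=0\}$. A distribution $f\in\mathcal{D}'(a,b)$ is Henstock–Kurzweil integrable if there is $F\in C_0$ with $DF=f$ (such $F$ is unique, the primitive of $f$), and its distributional Henstock–Kurzweil integral is $\int_c^d f=F(d)-F(c)$. $D_{HK}$ is the space of these distributions with the Alexiewicz norm $\|f\|_A=\sup_{x\in[a,b]}|F(x)|$; it is a Banach space containing $L^1[a,b]$ as a dense subspace, and integrals against functions of bounded variation are defined (via $\int_a^b fg=F(b)g(b)-\int_a^b F\,dg$). Riemann–Liouville fractional integral on $D_{HK}$: for $n\ge 1$, $\mathcal{J}_a^nf(x)=\frac{1}{\Gamma(n)}\int_a^x(x-t)^{n-1}f(t)\,dt$ for $a\le x\le b$ (distributional Henstock–Kurzweil integral); for $0<n<1$, $\mathcal{J}_a^nf(x)=\frac{1}{\Gamma(n)}\lim_{k\to\infty}\int_a^x(x-t)^{n-1}f_k(t)\,dt$, where $(f_k)\subset L^1[a,b]$ with $\|f_k-f\|_A\to0$ (the convolution of the $L^1$ kernel $u\mapsto u^{n-1}$ on $(0,b-a]$, $0$ elsewhere, with $f$); $\mathcal{J}_a^0$ is the identity. *)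

theory Defs
  imports "HOL-Analysis.Analysis"
begin

text \<open>Representation of D_HK: a distribution f in D_HK is represented by its
(unique) primitive F in C_0 = {F in C[a,b]. F a = 0}; the map f to F is the
isometric isomorphism of D_HK onto C_0 (distributions are not in the library).
Only the values of F on [a,b] are relevant.\<close>

definition DHK :: "real \<Rightarrow> real \<Rightarrow> (real \<Rightarrow> real) set" where
  "DHK a b = {F. continuous_on {a..b} F \<and> F a = 0}"

definition alex_norm :: "real \<Rightarrow> real \<Rightarrow> (real \<Rightarrow> real) \<Rightarrow> real" where
  "alex_norm a b F = (SUP x\<in>{a..b}. \<bar>F x\<bar>)"

text \<open>Primitive of a (pointwise) function g that is Henstock--Kurzweil integrable
on [a,b]; for g in L^1[a,b] this is the embedding of L^1 into D_HK.\<close>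
definition prim :: "real \<Rightarrow> (real \<Rightarrow> real) \<Rightarrow> (real \<Rightarrow> real)" where
  "prim a g = (\<lambda>x. integral {a..x} g)"

definition has_RS_integral ::
  "(real \<Rightarrow> real) \<Rightarrow> (real \<Rightarrow> real) \<Rightarrow> real \<Rightarrow> real \<Rightarrow> real \<Rightarrow> bool" where
  "has_RS_integral F g c d I \<longleftrightarrow>
     (\<forall>\<epsilon>>0. \<exists>\<delta>>0. \<forall>(m::nat) (x::nat \<Rightarrow> real) (t::nat \<Rightarrow> real).
        (x 0 = c \<and> x m = d \<and>
         (\<forall>i<m. x i < x (Suc i) \<and> x (Suc i) - x i < \<delta> \<and> x i \<le> t i \<and> t i \<le> x (Suc i)))
        \<longrightarrow> \<bar>(\<Sum>i<m. F (t i) * (g (x (Suc i)) - g (x i))) - I\<bar> < \<epsilon>)"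

definition RS_integral :: "(real \<Rightarrow> real) \<Rightarrow> (real \<Rightarrow> real) \<Rightarrow> real \<Rightarrow> real \<Rightarrow> real" where
  "RS_integral F g c d = (THE I. has_RS_integral F g c d I)"

text \<open>Integral over [a,x] of f (with primitive F) against a function g of bounded
variation: F(x) g(x) - int_a^x F dg (the primitive of f restricted to (a,x) is F on [a,x]).\<close>
definition hk_int_bv :: "real \<Rightarrow> (real \<Rightarrow> real) \<Rightarrow> (real \<Rightarrow> real) \<Rightarrow> real \<Rightarrow> real" where
  "hk_int_bv a F g x = F x * g x - RS_integral F g a x"

text \<open>Kernel u ^ (n-1) for u \<ge> 0 (with 0^0 = 1; the value at u = 0 is irrelevant for n < 1).\<close>
definition rl_kernel :: "real \<Rightarrow> real \<Rightarrow> real" where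
  "rl_kernel n u = (if u = 0 then (if n = 1 then 1 else 0) else u powr (n - 1))"

text \<open>For n \<ge> 1: the pointwise function J_a^n f(x), f in D_HK with primitive F.\<close>
definition RL_fun :: "real \<Rightarrow> real \<Rightarrow> (real \<Rightarrow> real) \<Rightarrow> real \<Rightarrow> real" where
  "RL_fun n a F x = (1 / Gamma n) * hk_int_bv a F (\<lambda>t. rl_kernel n (x - t)) x"

definition RL_L1 :: "real \<Rightarrow> real \<Rightarrow> (real \<Rightarrow> real) \<Rightarrow> real \<Rightarrow> real" where
  "RL_L1 n a g x = (1 / Gamma n) * integral {a..x} (\<lambda>t. rl_kernel n (x - t) * g t)"

text \<open>For 0 < n < 1: P (a primitive) is the D_HK-limit of J_a^n g_k for every
sequence (g_k) in L^1[a,b] converging to f (primitive F) in the Alexiewicz norm.\<close>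
definition RL_limit :: "real \<Rightarrow> real \<Rightarrow> real \<Rightarrow> (real \<Rightarrow> real) \<Rightarrow> (real \<Rightarrow> real) \<Rightarrow> bool" where
  "RL_limit n a b F P \<longleftrightarrow> P \<in> DHK a b \<and>
     (\<forall>gs::nat \<Rightarrow> real \<Rightarrow> real.
        (\<forall>k. gs k absolutely_integrable_on {a..b}) \<and>
        (\<lambda>k. alex_norm a b (\<lambda>x. prim a (gs k) x - F x)) \<longlonglongrightarrow> 0
        \<longrightarrow> (\<lambda>k. alex_norm a b (\<lambda>x. prim a (RL_L1 n a (gs k)) x - P x)) \<longlonglongrightarrow> 0)"

text \<open>Primitive of J_a^n f, for f in D_HK with primitive F.\<close>
definition RL_prim :: "real \<Rightarrow> real \<Rightarrow> real \<Rightarrow> (real \<Rightarrow> real) \<Rightarrow> (real \<Rightarrow> real)" where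
  "RL_prim n a b F =
     (if n = 0 then F
      else if 1 \<le> n then prim a (RL_fun n a F)
      else (SOME P. RL_limit n a b F P))"

end

theory Submission
  imports Defs
begin

definition tagdiv :: "real \<Rightarrow> real \<Rightarrow> real \<Rightarrow> nat \<Rightarrow> (nat \<Rightarrow> real) \<Rightarrow> (nat \<Rightarrow> real) \<Rightarrow> bool" where
  "tagdiv c d \<delta> m x t \<longleftrightarrow> x 0 = c \<and> x m = d \<and>
     (\<forall>i<m. x i < x (Suc i) \<and> x (Suc i) - x i < \<delta> \<and> x i \<le> t i \<and> t i \<le> x (Suc i))"

definition RSsum :: "(real \<Rightarrow> real) \<Rightarrow> (real \<Rightarrow> real) \<Rightarrow> nat \<Rightarrow> (nat \<Rightarrow> real) \<Rightarrow> (nat \<Rightarrow> real) \<Rightarrow> real" where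
  "RSsum F g m x t = (\<Sum>i<m. F (t i) * (g (x (Suc i)) - g (x i)))"

lemma has_RS_iff:
  "has_RS_integral F g c d I \<longleftrightarrow>
    (\<forall>\<epsilon>>0. \<exists>\<delta>>0. \<forall>m x t. tagdiv c d \<delta> m x t \<longrightarrow> \<bar>RSsum F g m x t - I\<bar> < \<epsilon>)"
  unfolding has_RS_integral_def tagdiv_def RSsum_def by blast

lemma tagdiv_mono:
  assumes "tagdiv c d \<delta> m x t" "i \<le> j" "j \<le> m" shows "x i \<le> x j"
  using assms(2,3)
proof (induction j)
  case 0 thus ?case by simp
next
  case (Suc j)
  show ?case
  proof (cases "i = Suc j")
    case True thus ?thesis by simp
  next
    case False
    hence "i \<le> j" using Suc.prems by simp
    hence "x i \<le> x j" using Suc by simp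
    also have "x j < x (Suc j)" using assms(1) Suc.prems unfolding tagdiv_def by auto
    finally show ?thesis by simp
  qed
qed

lemma tagdiv_bounds:
  assumes "tagdiv c d \<delta> m x t" "i \<le> m" shows "c \<le> x i" "x i \<le> d"
  using tagdiv_mono[OF assms(1), of 0 i] tagdiv_mono[OF assms(1), of i m] assms
  unfolding tagdiv_def by auto

lemma tagdiv_tag:
  assumes "tagdiv c d \<delta> m x t" "i < m"
  shows "c \<le> x i" "x (Suc i) \<le> d" "x i \<le> t i" "t i \<le> x (Suc i)" "x i < x (Suc i)"
    "x (Suc i) - x i < \<delta>" "c \<le> t i" "t i \<le> d"
  using tagdiv_bounds[OF assms(1), of i] tagdiv_bounds[OF assms(1), of "Suc i"] assms
  unfolding tagdiv_def by auto

lemma tagdiv_le: "tagdiv c d \<delta> m x t \<Longrightarrow> \<delta> \<le> \<delta>' \<Longrightarrow> tagdiv c d \<delta>' m x t"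
  unfolding tagdiv_def by force

lemma tagdiv_exists:
  assumes "c \<le> d" "\<delta> > 0" shows "\<exists>m x t. tagdiv c d \<delta> m x t"
proof (cases "c = d")
  case True
  then show ?thesis by (intro exI[of _ 0] exI[of _ "\<lambda>_. c"]) (auto simp: tagdiv_def)
next
  case False
  hence cd: "c < d" using assms by simp
  define m where "m = nat \<lceil>(d - c) / \<delta>\<rceil> + 1"
  have mpos: "m > 0" by (simp add: m_def)
  have "(d-c)/\<delta> < real m" unfolding m_def by linarith
  hence hm: "(d - c) / real m < \<delta>" using mpos assms by (simp add: field_simps)
  define x where "x = (\<lambda>i::nat. c + real i * (d - c) / real m)"
  have dx: "x (Suc i) - x i = (d - c) / real m" for i
  proof -
    have "x (Suc i) - x i = (real (Suc i) * (d - c) - real i * (d - c)) / real m"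
      by (simp add: x_def diff_divide_distrib)
    also have "\<dots> = (d - c) / real m" by (simp add: algebra_simps)
    finally show ?thesis .
  qed
  have pos: "(d - c) / real m > 0" using cd mpos by simp
  have "x i < x (Suc i)" for i using dx[of i] pos by linarith
  moreover have "x 0 = c" "x m = d" using mpos by (auto simp: x_def)
  ultimately have "tagdiv c d \<delta> m x x"
    unfolding tagdiv_def using dx hm by (auto simp: less_imp_le)
  thus ?thesis by blast
qed

lemma tagdiv_same: "tagdiv c c \<delta> m x t \<Longrightarrow> m = 0"
proof (rule ccontr)
  assume tg: "tagdiv c c \<delta> m x t" and "m \<noteq> 0"
  hence "x 0 < x 1" "x 1 \<le> x m" using tagdiv_mono[OF tg, of 1 m] unfolding tagdiv_def by auto
  thus False using tg unfolding tagdiv_def by auto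
qed

lemma has_RS_same: "has_RS_integral F g c c 0"
  unfolding has_RS_iff
  by (intro allI impI exI[of _ 1]) (auto dest: tagdiv_same simp: RSsum_def)

lemma has_RS_const: "has_RS_integral F (\<lambda>_. C) c d 0"
  unfolding has_RS_iff by (auto simp: RSsum_def)

lemma lin3: "(a::real) < c/2 \<Longrightarrow> b < c/2 \<Longrightarrow> c \<le> a + b \<Longrightarrow> False"
  by linarith

lemma has_RS_unique:
  assumes "has_RS_integral F g c d I" "has_RS_integral F g c d J" "c \<le> d" shows "I = J"
proof (rule ccontr)
  assume ne: "I \<noteq> J"
  define \<epsilon> where "\<epsilon> = \<bar>I - J\<bar>/2"
  have \<epsilon>: "\<epsilon> > 0" using ne by (simp add: \<epsilon>_def)
  obtain \<delta>1 where "\<delta>1>0" and d1: "\<forall>m x t. tagdiv c d \<delta>1 m x t \<longrightarrow> \<bar>RSsum F g m x t - I\<bar> < \<epsilon>"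
    using assms(1) \<epsilon> unfolding has_RS_iff by blast
  obtain \<delta>2 where "\<delta>2>0" and d2: "\<forall>m x t. tagdiv c d \<delta>2 m x t \<longrightarrow> \<bar>RSsum F g m x t - J\<bar> < \<epsilon>"
    using assms(2) \<epsilon> unfolding has_RS_iff by blast
  obtain m x t where tg: "tagdiv c d (min \<delta>1 \<delta>2) m x t"
    using tagdiv_exists[OF assms(3), of "min \<delta>1 \<delta>2"] \<open>\<delta>1>0\<close> \<open>\<delta>2>0\<close> by auto
  have "tagdiv c d \<delta>1 m x t" "tagdiv c d \<delta>2 m x t" using tg tagdiv_le by auto
  hence "\<bar>RSsum F g m x t - I\<bar> < \<epsilon>" "\<bar>RSsum F g m x t - J\<bar> < \<epsilon>" using d1 d2 by auto
  moreover have "\<bar>I - J\<bar> \<le> \<bar>RSsum F g m x t - I\<bar> + \<bar>RSsum F g m x t - J\<bar>"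
    using abs_triangle_ineq4[of "RSsum F g m x t - J" "RSsum F g m x t - I"] by (simp add: abs_minus_commute)
  ultimately show False unfolding \<epsilon>_def using lin3 by blast
qed

lemma RS_integral_eqI:
  "has_RS_integral F g c d I \<Longrightarrow> c \<le> d \<Longrightarrow> RS_integral F g c d = I"
  unfolding RS_integral_def by (rule the_equality) (auto intro: has_RS_unique)

lemma RSsum_bound:
  assumes tg: "tagdiv c d \<delta> m x t" and F: "\<forall>s\<in>{c..d}. \<bar>F s\<bar> \<le> M"
    and mono: "\<forall>s\<in>{c..d}. \<forall>s'\<in>{c..d}. s \<le> s' \<longrightarrow> k s' \<le> k s"
  shows "\<bar>RSsum F k m x t\<bar> \<le> M * (k c - k d)"
proof -
  have "\<bar>RSsum F k m x t\<bar> \<le> (\<Sum>i<m. \<bar>F (t i) * (k (x (Suc i)) - k (x i))\<bar>)"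
    unfolding RSsum_def by (rule sum_abs)
  also have "\<dots> \<le> (\<Sum>i<m. M * (k (x i) - k (x (Suc i))))"
  proof (rule sum_mono)
    fix i assume "i \<in> {..<m}"
    hence i: "i < m" by simp
    note tgi = tagdiv_tag[OF tg i]
    have kk: "k (x (Suc i)) \<le> k (x i)" using mono tgi by auto
    have "\<bar>F (t i) * (k (x (Suc i)) - k (x i))\<bar> = \<bar>F (t i)\<bar> * (k (x i) - k (x (Suc i)))"
      using kk by (simp add: abs_mult)
    also have "\<dots> \<le> M * (k (x i) - k (x (Suc i)))"
      using F tgi kk by (intro mult_right_mono) auto
    finally show "\<bar>F (t i) * (k (x (Suc i)) - k (x i))\<bar> \<le> M * (k (x i) - k (x (Suc i)))" .
  qed
  also have "\<dots> = M * (k (x 0) - k (x m))"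
    by (simp add: sum_distrib_left[symmetric] sum_lessThan_telescope'[of "\<lambda>i. k (x i)"])
  finally show ?thesis using tg unfolding tagdiv_def by simp
qed

lemma has_RS_bound:
  assumes I: "has_RS_integral F k c d I" and cd: "c \<le> d"
    and F: "\<forall>s\<in>{c..d}. \<bar>F s\<bar> \<le> M"
    and mono: "\<forall>s\<in>{c..d}. \<forall>s'\<in>{c..d}. s \<le> s' \<longrightarrow> k s' \<le> k s"
  shows "\<bar>I\<bar> \<le> M * (k c - k d)"
proof (rule field_le_epsilon)
  fix e :: real assume e: "0 < e"
  obtain \<delta> where "\<delta>>0" and d1: "\<forall>m x t. tagdiv c d \<delta> m x t \<longrightarrow> \<bar>RSsum F k m x t - I\<bar> < e"
    using I e unfolding has_RS_iff by blast
  obtain m x t where tg: "tagdiv c d \<delta> m x t" using tagdiv_exists[OF cd \<open>\<delta>>0\<close>] by auto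
  have "\<bar>RSsum F k m x t\<bar> \<le> M * (k c - k d)" by (rule RSsum_bound[OF tg F mono])
  moreover have "\<bar>RSsum F k m x t - I\<bar> < e" using d1 tg by auto
  ultimately show "\<bar>I\<bar> \<le> M * (k c - k d) + e" by arith
qed

lemma RSsum_lin:
  "RSsum (\<lambda>s. \<alpha> * F s + \<beta> * G s) k m x t = \<alpha> * RSsum F k m x t + \<beta> * RSsum G k m x t"
  unfolding RSsum_def sum_distrib_left sum.distrib[symmetric]
  by (rule sum.cong) (auto simp: algebra_simps)

lemma RSsum_diff:
  "RSsum (\<lambda>s. F s - G s) k m x t = RSsum F k m x t - RSsum G k m x t"
  unfolding RSsum_def by (simp add: sum_subtractf[symmetric] algebra_simps)

lemma has_RS_lin:
  assumes I: "has_RS_integral F k c d I" and J: "has_RS_integral G k c d J"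
  shows "has_RS_integral (\<lambda>s. \<alpha> * F s + \<beta> * G s) k c d (\<alpha> * I + \<beta> * J)"
  unfolding has_RS_iff
proof (intro allI impI)
  fix \<epsilon> :: real assume \<epsilon>: "\<epsilon> > 0"
  define \<eta> where "\<eta> = \<epsilon> / (\<bar>\<alpha>\<bar> + \<bar>\<beta>\<bar> + 1)"
  have \<eta>: "\<eta> > 0" using \<epsilon> by (simp add: \<eta>_def)
  obtain \<delta>1 where "\<delta>1>0" and d1: "\<forall>m x t. tagdiv c d \<delta>1 m x t \<longrightarrow> \<bar>RSsum F k m x t - I\<bar> < \<eta>"
    using I \<eta> unfolding has_RS_iff by blast
  obtain \<delta>2 where "\<delta>2>0" and d2: "\<forall>m x t. tagdiv c d \<delta>2 m x t \<longrightarrow> \<bar>RSsum G k m x t - J\<bar> < \<eta>"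
    using J \<eta> unfolding has_RS_iff by blast
  show "\<exists>\<delta>>0. \<forall>m x t. tagdiv c d \<delta> m x t \<longrightarrow>
      \<bar>RSsum (\<lambda>s. \<alpha> * F s + \<beta> * G s) k m x t - (\<alpha> * I + \<beta> * J)\<bar> < \<epsilon>"
  proof (intro exI[of _ "min \<delta>1 \<delta>2"] conjI allI impI)
    show "min \<delta>1 \<delta>2 > 0" using \<open>\<delta>1>0\<close> \<open>\<delta>2>0\<close> by simp
    fix m x t assume tg: "tagdiv c d (min \<delta>1 \<delta>2) m x t"
    have "tagdiv c d \<delta>1 m x t" "tagdiv c d \<delta>2 m x t" using tg tagdiv_le by auto
    hence a: "\<bar>RSsum F k m x t - I\<bar> < \<eta>" and b: "\<bar>RSsum G k m x t - J\<bar> < \<eta>" using d1 d2 by auto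
    have "\<bar>RSsum (\<lambda>s. \<alpha> * F s + \<beta> * G s) k m x t - (\<alpha> * I + \<beta> * J)\<bar>
        = \<bar>\<alpha> * (RSsum F k m x t - I) + \<beta> * (RSsum G k m x t - J)\<bar>"
      by (simp add: RSsum_lin algebra_simps)
    also have "\<dots> \<le> \<bar>\<alpha>\<bar> * \<bar>RSsum F k m x t - I\<bar> + \<bar>\<beta>\<bar> * \<bar>RSsum G k m x t - J\<bar>"
      by (simp add: abs_mult abs_triangle_ineq[THEN order_trans])
    also have "\<dots> \<le> \<bar>\<alpha>\<bar> * \<eta> + \<bar>\<beta>\<bar> * \<eta>"
      using a b by (intro add_mono mult_left_mono) auto
    also have "\<dots> < \<epsilon>"
    proof -
      have "(\<bar>\<alpha>\<bar> + \<bar>\<beta>\<bar>) * \<eta> < (\<bar>\<alpha>\<bar> + \<bar>\<beta>\<bar> + 1) * \<eta>" using \<eta> by simp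
      also have "\<dots> = \<epsilon>" unfolding \<eta>_def by (simp add: field_simps)
      finally show ?thesis by (simp add: algebra_simps)
    qed
    finally show "\<bar>RSsum (\<lambda>s. \<alpha> * F s + \<beta> * G s) k m x t - (\<alpha> * I + \<beta> * J)\<bar> < \<epsilon>" .
  qed
qed

lemma has_RS_diff:
  assumes "has_RS_integral F k c d I" "has_RS_integral G k c d J"
  shows "has_RS_integral (\<lambda>s. F s - G s) k c d (I - J)"
  using has_RS_lin[OF assms, of 1 "-1"] by simp

lemma small_mult:
  fixes x V C \<epsilon> :: real
  assumes "0 \<le> V" "\<bar>x\<bar> < \<epsilon> / (C * (V + 1))" "C > 0"
  shows "x * V \<le> \<epsilon> / C"
proof -
  have pos: "C * (V + 1) > 0" using assms by simp
  have "\<bar>x\<bar> * (C * (V + 1)) < \<epsilon>" using assms(2) pos_less_divide_eq[OF pos] by blast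
  hence "(\<bar>x\<bar> * (V + 1)) * C < \<epsilon>" by (simp add: mult_ac)
  hence "\<bar>x\<bar> * (V + 1) < \<epsilon> / C" using pos_less_divide_eq[OF assms(3)] by blast
  moreover have "x * V \<le> \<bar>x\<bar> * (V + 1)"
    using assms(1) by (smt (verit, best) abs_ge_self abs_not_less_zero mult_left_mono mult_right_mono)
  ultimately show ?thesis by linarith
qed

lemma has_RS_limit:
  assumes cd: "c \<le> d" and mono: "\<forall>s\<in>{c..d}. \<forall>s'\<in>{c..d}. s \<le> s' \<longrightarrow> k s' \<le> k s"
    and G: "\<And>j. has_RS_integral (Gs j) k c d (Is j)"
    and e: "e \<longlonglongrightarrow> 0" and ap: "\<And>j s. s \<in> {c..d} \<Longrightarrow> \<bar>Gs j s - F s\<bar> \<le> e j"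
  shows "\<exists>I. has_RS_integral F k c d I"
proof -
  define V where "V = k c - k d"
  have V: "V \<ge> 0" using mono cd by (auto simp: V_def)
  have diff: "\<bar>Is i - Is j\<bar> \<le> (e i + e j) * V" for i j
  proof -
    have "has_RS_integral (\<lambda>s. Gs i s - Gs j s) k c d (Is i - Is j)" by (rule has_RS_diff[OF G G])
    moreover have "\<forall>s\<in>{c..d}. \<bar>Gs i s - Gs j s\<bar> \<le> e i + e j"
    proof
      fix s assume "s \<in> {c..d}"
      hence "\<bar>Gs i s - F s\<bar> \<le> e i" "\<bar>Gs j s - F s\<bar> \<le> e j" using ap by auto
      thus "\<bar>Gs i s - Gs j s\<bar> \<le> e i + e j" by arith
    qed
    ultimately show ?thesis using has_RS_bound cd mono unfolding V_def by blast
  qed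
  have "Cauchy Is"
  proof (rule metric_CauchyI)
    fix \<epsilon> :: real assume \<epsilon>: "\<epsilon> > 0"
    have "\<epsilon> / (4 * (V + 1)) > 0" using \<epsilon> V by simp
    then obtain N where N: "\<forall>j\<ge>N. norm (e j - 0) < \<epsilon> / (4 * (V + 1))"
      using LIMSEQ_D[OF e] by blast
    show "\<exists>M. \<forall>m\<ge>M. \<forall>n\<ge>M. dist (Is m) (Is n) < \<epsilon>"
    proof (intro exI allI impI)
      fix p q assume "p \<ge> N" "q \<ge> N"
      hence a: "e p * V \<le> \<epsilon> / 4" "e q * V \<le> \<epsilon> / 4"
        using N small_mult[OF V, of _ \<epsilon> 4] by auto
      have "dist (Is p) (Is q) \<le> (e p + e q) * V" using diff by (simp add: dist_real_def)
      also have "\<dots> \<le> \<epsilon> / 2" using a by (simp add: distrib_right)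
      also have "\<dots> < \<epsilon>" using \<epsilon> by simp
      finally show "dist (Is p) (Is q) < \<epsilon>" .
    qed
  qed
  then obtain I where I: "Is \<longlonglongrightarrow> I" using Cauchy_convergent_iff convergent_def by blast
  show ?thesis
  proof (intro exI, unfold has_RS_iff, intro allI impI)
    fix \<epsilon> :: real assume \<epsilon>: "\<epsilon> > 0"
    have "\<epsilon> / (3 * (V + 1)) > 0" using \<epsilon> V by simp
    then obtain N1 where N1: "\<forall>j\<ge>N1. norm (e j - 0) < \<epsilon> / (3 * (V + 1))"
      using LIMSEQ_D[OF e] by blast
    have "\<epsilon> / 3 > 0" using \<epsilon> by simp
    then obtain N2 where N2: "\<forall>j\<ge>N2. norm (Is j - I) < \<epsilon> / 3"
      using LIMSEQ_D[OF I] by blast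
    define j where "j = max N1 N2"
    have ej: "e j * V \<le> \<epsilon> / 3" using N1 small_mult[OF V, of _ \<epsilon> 3] by (auto simp: j_def)
    have Ij: "\<bar>Is j - I\<bar> < \<epsilon> / 3" using N2 by (auto simp: j_def)
    obtain \<delta> where "\<delta>>0" and d1: "\<forall>m x t. tagdiv c d \<delta> m x t \<longrightarrow> \<bar>RSsum (Gs j) k m x t - Is j\<bar> < \<epsilon>/3"
      using G[of j] \<open>\<epsilon>/3 > 0\<close> unfolding has_RS_iff by blast
    show "\<exists>\<delta>>0. \<forall>m x t. tagdiv c d \<delta> m x t \<longrightarrow> \<bar>RSsum F k m x t - I\<bar> < \<epsilon>"
    proof (intro exI[of _ \<delta>] conjI allI impI)
      show "\<delta> > 0" by fact
      fix m x t assume tg: "tagdiv c d \<delta> m x t"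
      have "\<forall>s\<in>{c..d}. \<bar>F s - Gs j s\<bar> \<le> e j" using ap by (simp add: abs_minus_commute)
      hence "\<bar>RSsum (\<lambda>s. F s - Gs j s) k m x t\<bar> \<le> e j * (k c - k d)"
        by (rule RSsum_bound[OF tg _ mono])
      hence a: "\<bar>RSsum F k m x t - RSsum (Gs j) k m x t\<bar> \<le> \<epsilon> / 3"
        using ej by (simp add: RSsum_diff V_def)
      have b: "\<bar>RSsum (Gs j) k m x t - Is j\<bar> < \<epsilon>/3" using d1 tg by blast
      show "\<bar>RSsum F k m x t - I\<bar> < \<epsilon>" using a b Ij by arith
    qed
  qed
qed

lemma cont_mult_absint:
  fixes h g :: "real \<Rightarrow> real"
  assumes "continuous_on {c..d} h" "g absolutely_integrable_on {c..d}"
  shows "(\<lambda>s. h s * g s) absolutely_integrable_on {c..d}"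
proof (rule absolutely_integrable_bounded_measurable_product_real)
  show "h \<in> borel_measurable (lebesgue_on {c..d})"
    using assms(1) by (rule continuous_imp_measurable_on_sets_lebesgue) simp
  show "{c..d} \<in> sets lebesgue" by simp
  show "bounded (h ` {c..d})"
    using compact_continuous_image[OF assms(1)] compact_imp_bounded by blast
qed (rule assms(2))

lemma absint_integrable: "(g::real\<Rightarrow>real) absolutely_integrable_on S \<Longrightarrow> g integrable_on S"
  by (simp add: absolutely_integrable_on_def)

lemma absint_abs_integrable: "(g::real\<Rightarrow>real) absolutely_integrable_on S \<Longrightarrow> (\<lambda>s. \<bar>g s\<bar>) integrable_on S"
  by (simp add: absolutely_integrable_on_def)

lemma sub_int: "(f::real\<Rightarrow>real) integrable_on {c..d} \<Longrightarrow> c \<le> p \<Longrightarrow> q \<le> d \<Longrightarrow> f integrable_on {p..q}"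
  by (rule integrable_on_subinterval) auto

lemma integral_sum_tagdiv:
  assumes tg: "tagdiv c d \<delta> m x t" and h: "(h::real\<Rightarrow>real) integrable_on {c..d}"
  shows "(\<Sum>i<m. integral {x i..x (Suc i)} h) = integral {c..d} h"
proof -
  have "j \<le> m \<Longrightarrow> (\<Sum>i<j. integral {x i..x (Suc i)} h) = integral {c..x j} h" for j
  proof (induction j)
    case 0 thus ?case using tg by (simp add: tagdiv_def)
  next
    case (Suc j)
    hence IH: "(\<Sum>i<j. integral {x i..x (Suc i)} h) = integral {c..x j} h" by simp
    have j: "j < m" using Suc.prems by simp
    note tj = tagdiv_tag[OF tg j]
    have "h integrable_on {c..x (Suc j)}" by (rule integrable_on_subinterval[OF h]) (use tj in auto)
    then have "integral {c..x j} h + integral {x j..x (Suc j)} h = integral {c..x (Suc j)} h"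
      using tj by (intro Henstock_Kurzweil_Integration.integral_combine) auto
    thus ?case using IH by simp
  qed
  from this[of m] tg show ?thesis by (simp add: tagdiv_def)
qed

lemma piece_bound:
  fixes k g :: "real \<Rightarrow> real"
  assumes "c \<le> p" "p \<le> q" "q \<le> d" and eta: "\<forall>s\<in>{p..q}. \<bar>k r - k s\<bar> \<le> \<eta>"
    and kc: "continuous_on {c..d} k" and g: "g absolutely_integrable_on {c..d}"
  shows "\<bar>integral {p..q} (\<lambda>s. (k r - k s) * g s)\<bar> \<le> \<eta> * integral {p..q} (\<lambda>s. \<bar>g s\<bar>)"
proof -
  have sub: "{p..q} \<subseteq> {c..d}" using assms by auto
  have "continuous_on {c..d} (\<lambda>s. k r - k s)" using kc by (intro continuous_intros)
  hence "(\<lambda>s. (k r - k s) * g s) absolutely_integrable_on {c..d}" using cont_mult_absint g by blast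
  hence i1: "(\<lambda>s. (k r - k s) * g s) integrable_on {p..q}"
    using absint_integrable integrable_on_subinterval sub by blast
  have i2: "(\<lambda>s. \<bar>g s\<bar>) integrable_on {p..q}"
    using absint_abs_integrable[OF g] integrable_on_subinterval sub by blast
  have "norm (integral {p..q} (\<lambda>s. (k r - k s) * g s)) \<le> integral {p..q} (\<lambda>s. \<eta> * \<bar>g s\<bar>)"
  proof (rule integral_norm_bound_integral[OF i1])
    show "(\<lambda>s. \<eta> * \<bar>g s\<bar>) integrable_on {p..q}" using i2 by (rule integrable_on_mult_right)
    fix s assume "s \<in> {p..q}"
    hence "\<bar>k r - k s\<bar> \<le> \<eta>" using eta by blast
    thus "norm ((k r - k s) * g s) \<le> \<eta> * \<bar>g s\<bar>"
      by (simp add: abs_mult mult_right_mono)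
  qed
  thus ?thesis by simp
qed

lemma has_RS_ibp:
  fixes k g :: "real \<Rightarrow> real"
  assumes cd: "c \<le> d" and kc: "continuous_on {c..d} k" and g: "g absolutely_integrable_on {c..d}"
  shows "has_RS_integral (\<lambda>s. integral {c..s} g) k c d
           (integral {c..d} g * k d - integral {c..d} (\<lambda>s. k s * g s))"
  unfolding has_RS_iff
proof (intro allI impI)
  fix \<epsilon> :: real assume \<epsilon>: "\<epsilon> > 0"
  define G where "G = (\<lambda>s. integral {c..s} g)"
  define A where "A = integral {c..d} (\<lambda>s. \<bar>g s\<bar>)"
  have gi: "g integrable_on {c..d}" using absint_integrable[OF g] .
  have agi: "(\<lambda>s. \<bar>g s\<bar>) integrable_on {c..d}" using absint_abs_integrable[OF g] .
  have A0: "A \<ge> 0" unfolding A_def by (rule integral_nonneg[OF agi]) simp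
  define \<eta> where "\<eta> = \<epsilon> / (A + 1)"
  have \<eta>: "\<eta> > 0" using \<epsilon> A0 by (simp add: \<eta>_def)
  have uc: "uniformly_continuous_on {c..d} k" using kc compact_uniformly_continuous by blast
  obtain \<delta> where \<delta>: "\<delta> > 0"
    and d\<delta>: "\<forall>s\<in>{c..d}. \<forall>s'\<in>{c..d}. dist s' s < \<delta> \<longrightarrow> dist (k s') (k s) < \<eta>"
    using uc \<eta> unfolding uniformly_continuous_on_def by metis
  have kgi: "(\<lambda>s. k s * g s) integrable_on {c..d}"
    using cont_mult_absint[OF kc g] absint_integrable by blast
  have Gint: "G q - G p = integral {p..q} g" if "c \<le> p" "p \<le> q" "q \<le> d" for p q
  proof -
    have "g integrable_on {c..q}" using sub_int[OF gi] that by auto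
    hence "integral {c..p} g + integral {p..q} g = integral {c..q} g"
      using that by (intro Henstock_Kurzweil_Integration.integral_combine) auto
    thus ?thesis unfolding G_def by simp
  qed
  have split: "integral {p..q} h = integral {p..w} h + integral {w..q} h"
    if "c \<le> p" "p \<le> w" "w \<le> q" "q \<le> d" "h integrable_on {c..d}" for p q w and h :: "real \<Rightarrow> real"
  proof -
    have "h integrable_on {p..q}" using that sub_int by auto
    thus ?thesis using that by (intro Henstock_Kurzweil_Integration.integral_combine[symmetric]) auto
  qed
  have lin: "integral {p..q} (\<lambda>s. (k r - k s) * g s) = k r * integral {p..q} g - integral {p..q} (\<lambda>s. k s * g s)"
    if "c \<le> p" "q \<le> d" for p q r
  proof -
    have "(\<lambda>s. k s * g s) integrable_on {p..q}" using sub_int[OF kgi] that by auto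
    moreover have "g integrable_on {p..q}" using sub_int[OF gi] that by auto
    ultimately show ?thesis
      by (simp add: left_diff_distrib integral_diff integrable_on_mult_right)
  qed
  show "\<exists>\<delta>>0. \<forall>m x t. tagdiv c d \<delta> m x t \<longrightarrow>
     \<bar>RSsum (\<lambda>s. integral {c..s} g) k m x t - (integral {c..d} g * k d - integral {c..d} (\<lambda>s. k s * g s))\<bar> < \<epsilon>"
  proof (intro exI[of _ \<delta>] conjI allI impI)
    show "\<delta> > 0" by fact
    fix m x t assume tg: "tagdiv c d \<delta> m x t"
    define D where "D i = G (x (Suc i)) * k (x (Suc i)) - G (x i) * k (x i)
        - G (t i) * (k (x (Suc i)) - k (x i)) - integral {x i..x (Suc i)} (\<lambda>s. k s * g s)" for i
    have sumD: "(\<Sum>i<m. D i) = G d * k d - integral {c..d} (\<lambda>s. k s * g s) - RSsum G k m x t"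
    proof -
      have "(\<Sum>i<m. D i) = (\<Sum>i<m. G (x (Suc i)) * k (x (Suc i)) - G (x i) * k (x i)) - RSsum G k m x t
          - (\<Sum>i<m. integral {x i..x (Suc i)} (\<lambda>s. k s * g s))"
        unfolding D_def RSsum_def by (simp add: sum_subtractf)
      also have "(\<Sum>i<m. G (x (Suc i)) * k (x (Suc i)) - G (x i) * k (x i)) = G d * k d"
        using sum_lessThan_telescope[of "\<lambda>i. G (x i) * k (x i)" m] tg by (simp add: tagdiv_def G_def)
      also have "(\<Sum>i<m. integral {x i..x (Suc i)} (\<lambda>s. k s * g s)) = integral {c..d} (\<lambda>s. k s * g s)"
        by (rule integral_sum_tagdiv[OF tg kgi])
      finally show ?thesis by simp
    qed
    have Dbound: "\<bar>D i\<bar> \<le> \<eta> * integral {x i..x (Suc i)} (\<lambda>s. \<bar>g s\<bar>)" if i: "i < m" for i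
    proof -
      note tgi = tagdiv_tag[OF tg i]
      define u where "u = x i"
      define v where "v = x (Suc i)"
      define w where "w = t i"
      have o: "c \<le> u" "u \<le> w" "w \<le> v" "v \<le> d" "v - u < \<delta>" using tgi by (auto simp: u_def v_def w_def)
      have close: "\<bar>k r - k s\<bar> \<le> \<eta>" if "r \<in> {u..v}" "s \<in> {u..v}" for r s
      proof -
        have "dist s r < \<delta>" using that o by (auto simp: dist_real_def)
        hence "dist (k s) (k r) < \<eta>" using d\<delta> that o by auto
        thus ?thesis by (simp add: dist_real_def abs_minus_commute)
      qed
      have eqD: "D i = integral {w..v} (\<lambda>s. (k v - k s) * g s) + integral {u..w} (\<lambda>s. (k u - k s) * g s)"
      proof -
        have "D i = (G v - G w) * k v + (G w - G u) * k u - integral {u..v} (\<lambda>s. k s * g s)"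
          unfolding D_def u_def v_def w_def by (simp add: algebra_simps)
        also have "\<dots> = integral {w..v} g * k v + integral {u..w} g * k u
            - (integral {u..w} (\<lambda>s. k s * g s) + integral {w..v} (\<lambda>s. k s * g s))"
          using Gint o split[OF _ _ _ _ kgi, of u w v] by simp
        also have "\<dots> = integral {w..v} (\<lambda>s. (k v - k s) * g s) + integral {u..w} (\<lambda>s. (k u - k s) * g s)"
          using lin[of w v v] lin[of u w u] o by (simp add: algebra_simps)
        finally show ?thesis .
      qed
      have b1: "\<bar>integral {w..v} (\<lambda>s. (k v - k s) * g s)\<bar> \<le> \<eta> * integral {w..v} (\<lambda>s. \<bar>g s\<bar>)"
        by (rule piece_bound[OF _ _ _ _ kc g]) (use o close in auto)
      have b2: "\<bar>integral {u..w} (\<lambda>s. (k u - k s) * g s)\<bar> \<le> \<eta> * integral {u..w} (\<lambda>s. \<bar>g s\<bar>)"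
        by (rule piece_bound[OF _ _ _ _ kc g]) (use o close in auto)
      have "integral {u..v} (\<lambda>s. \<bar>g s\<bar>) = integral {u..w} (\<lambda>s. \<bar>g s\<bar>) + integral {w..v} (\<lambda>s. \<bar>g s\<bar>)"
        using split[OF _ _ _ _ agi, of u w v] o by simp
      hence "\<eta> * integral {u..v} (\<lambda>s. \<bar>g s\<bar>) = \<eta> * integral {w..v} (\<lambda>s. \<bar>g s\<bar>) + \<eta> * integral {u..w} (\<lambda>s. \<bar>g s\<bar>)"
        by (simp add: algebra_simps)
      thus ?thesis using eqD b1 b2 unfolding u_def v_def by arith
    qed
    have "\<bar>RSsum G k m x t - (G d * k d - integral {c..d} (\<lambda>s. k s * g s))\<bar> = \<bar>\<Sum>i<m. D i\<bar>"
      using sumD by (simp add: abs_minus_commute)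
    also have "\<dots> \<le> (\<Sum>i<m. \<bar>D i\<bar>)" by (rule sum_abs)
    also have "\<dots> \<le> (\<Sum>i<m. \<eta> * integral {x i..x (Suc i)} (\<lambda>s. \<bar>g s\<bar>))"
      by (rule sum_mono) (use Dbound in auto)
    also have "\<dots> = \<eta> * A"
      unfolding A_def sum_distrib_left[symmetric] using integral_sum_tagdiv[OF tg agi] by simp
    also have "\<dots> < \<epsilon>"
    proof -
      have "\<eta> * A = \<epsilon> * (A / (A + 1))" unfolding \<eta>_def by simp
      also have "\<dots> < \<epsilon> * 1" using \<epsilon> A0 by (intro mult_strict_left_mono) auto
      finally show ?thesis by simp
    qed
    finally show "\<bar>RSsum (\<lambda>s. integral {c..s} g) k m x t - (integral {c..d} g * k d - integral {c..d} (\<lambda>s. k s * g s))\<bar> < \<epsilon>"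
      unfolding G_def[symmetric] by (simp add: G_def)
  qed
qed

lemma rl_kernel_1: "rl_kernel 1 u = 1"
  by (simp add: rl_kernel_def)

lemma rl_kernel_pos: "m > 1 \<Longrightarrow> u \<ge> 0 \<Longrightarrow> rl_kernel m u = u powr (m - 1)"
  by (simp add: rl_kernel_def)

lemma kern_cont:
  assumes "m \<ge> 1" shows "continuous_on {c..x} (\<lambda>t. rl_kernel m (x - t))"
proof (cases "m = 1")
  case True thus ?thesis by (simp add: rl_kernel_1)
next
  case False
  hence m: "m > 1" using assms by simp
  have "continuous_on {c..x} (\<lambda>t. (x - t) powr (m - 1))"
    using m by (intro continuous_on_powr' continuous_intros) auto
  thus ?thesis by (rule continuous_on_cong[THEN iffD1, rotated 2]) (use m in \<open>auto simp: rl_kernel_pos\<close>)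
qed

lemma kern_mono:
  assumes "m \<ge> 1"
  shows "\<forall>s\<in>{c..x}. \<forall>s'\<in>{c..x}. s \<le> s' \<longrightarrow> rl_kernel m (x - s') \<le> rl_kernel m (x - s)"
proof (cases "m = 1")
  case True thus ?thesis by (simp add: rl_kernel_1)
next
  case False
  hence m: "m > 1" using assms by simp
  show ?thesis using m by (auto simp: rl_kernel_pos intro!: powr_mono2)
qed

lemma kern_var:
  assumes "m \<ge> 1" "a \<le> x" "x \<le> b" "a < b"
  shows "rl_kernel m (x - a) - rl_kernel m (x - x) \<le> (b - a) powr (m - 1)"
proof (cases "m = 1")
  case True thus ?thesis using assms by (simp add: rl_kernel_1)
next
  case False
  hence m: "m > 1" using assms by simp
  have "(x - a) powr (m - 1) \<le> (b - a) powr (m - 1)" using assms m by (intro powr_mono2) auto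
  thus ?thesis using m assms by (simp add: rl_kernel_pos)
qed

lemma kern0_abs: "\<bar>rl_kernel m 0\<bar> \<le> 1" by (simp add: rl_kernel_def)

lemma approx_prim:
  fixes F :: "real \<Rightarrow> real"
  assumes F: "continuous_on {a..b} F" "F a = 0" and ab: "a \<le> b" and e: "e > 0"
  shows "\<exists>g. continuous_on UNIV g \<and> (\<forall>s\<in>{a..b}. \<bar>integral {a..s} g - F s\<bar> \<le> e)"
proof -
  obtain p where p: "real_polynomial_function p" "\<And>x. x \<in> {a..b} \<Longrightarrow> \<bar>F x - p x\<bar> < e/2"
    using Stone_Weierstrass_real_polynomial_function[OF compact_Icc F(1), of "e/2"] e by auto
  obtain p' where p': "real_polynomial_function p'" "\<forall>x. (p has_real_derivative p' x) (at x)"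
    using has_real_derivative_polynomial_function[OF p(1)] by blast
  have cp': "continuous_on UNIV p'"
    using p'(1) continuous_on_polymonial_function real_polynomial_function_eq by blast
  have int: "integral {a..s} p' = p s - p a" if "s \<in> {a..b}" for s
  proof -
    have "(p' has_integral (p s - p a)) {a..s}"
    proof (rule fundamental_theorem_of_calculus)
      show "a \<le> s" using that by simp
      fix x assume "x \<in> {a..s}"
      have "(p has_real_derivative p' x) (at x within {a..s})"
        using p'(2) has_field_derivative_at_within by blast
      thus "(p has_vector_derivative p' x) (at x within {a..s})"
        by (simp add: has_real_derivative_iff_has_vector_derivative)
    qed
    thus ?thesis by (rule integral_unique)
  qed
  show ?thesis
  proof (intro exI[of _ p'] conjI ballI)
    show "continuous_on UNIV p'" by fact
    fix s assume s: "s \<in> {a..b}"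
    have "\<bar>F s - p s\<bar> < e/2" "\<bar>F a - p a\<bar> < e/2" using p(2) s ab by auto
    thus "\<bar>integral {a..s} p' - F s\<bar> \<le> e" using int[OF s] F(2) by arith
  qed
qed

lemma approx_seq:
  fixes F :: "real \<Rightarrow> real"
  assumes F: "continuous_on {a..b} F" "F a = 0" and ab: "a \<le> b"
  shows "\<exists>gs. (\<forall>j. continuous_on UNIV (gs j)) \<and>
     (\<forall>j. \<forall>s\<in>{a..b}. \<bar>integral {a..s} (gs j) - F s\<bar> \<le> inverse (real (Suc j)))"
proof -
  have "\<forall>j. \<exists>g. continuous_on UNIV g \<and> (\<forall>s\<in>{a..b}. \<bar>integral {a..s} g - F s\<bar> \<le> inverse (real (Suc j)))"
    using approx_prim[OF F ab] by simp
  thus ?thesis by metis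
qed

lemma RS_exists:
  assumes ab: "a < b" and m: "m \<ge> 1" and F: "continuous_on {a..b} F" "F a = 0" and x: "x \<in> {a..b}"
  shows "\<exists>I. has_RS_integral F (\<lambda>t. rl_kernel m (x - t)) a x I"
proof -
  obtain gs where gs1: "\<forall>j. continuous_on UNIV (gs j)"
    and gs2: "\<forall>j. \<forall>s\<in>{a..b}. \<bar>integral {a..s} (gs j) - F s\<bar> \<le> inverse (real (Suc j))"
    using approx_seq[OF F less_imp_le[OF ab]] by blast
  have gs: "\<And>j. continuous_on UNIV (gs j)"
    "\<And>j s. s \<in> {a..b} \<Longrightarrow> \<bar>integral {a..s} (gs j) - F s\<bar> \<le> inverse (real (Suc j))"
    using gs1 gs2 by auto
  show ?thesis
  proof (rule has_RS_limit[where Gs = "\<lambda>j s. integral {a..s} (gs j)" and e = "\<lambda>j. inverse (real (Suc j))"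
        and Is = "\<lambda>j. integral {a..x} (gs j) * rl_kernel m (x - x) - integral {a..x} (\<lambda>s. rl_kernel m (x - s) * gs j s)"])
    show "a \<le> x" using x by simp
    show "\<forall>s\<in>{a..x}. \<forall>s'\<in>{a..x}. s \<le> s' \<longrightarrow> rl_kernel m (x - s') \<le> rl_kernel m (x - s)"
      by (rule kern_mono[OF m])
    fix j
    have "continuous_on {a..x} (gs j)" using gs(1) continuous_on_subset by blast
    hence "gs j absolutely_integrable_on {a..x}" by (rule absolutely_integrable_continuous_real)
    thus "has_RS_integral (\<lambda>s. integral {a..s} (gs j)) (\<lambda>t. rl_kernel m (x - t)) a x
      (integral {a..x} (gs j) * rl_kernel m (x - x) - integral {a..x} (\<lambda>s. rl_kernel m (x - s) * gs j s))"
      using x by (intro has_RS_ibp kern_cont m) auto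
  next
    show "(\<lambda>j. inverse (real (Suc j))) \<longlonglongrightarrow> 0" by (rule LIMSEQ_inverse_real_of_nat)
  next
    fix j s assume "s \<in> {a..x}"
    thus "\<bar>integral {a..s} (gs j) - F s\<bar> \<le> inverse (real (Suc j))" using gs(2) x by auto
  qed
qed

lemma RL_fun_eq:
  assumes "has_RS_integral F (\<lambda>t. rl_kernel m (x - t)) a x I" "a \<le> x"
  shows "RL_fun m a F x = (1 / Gamma m) * (F x * rl_kernel m 0 - I)"
  unfolding RL_fun_def hk_int_bv_def using RS_integral_eqI[OF assms] by simp

lemma RL_fun_lin:
  assumes ab: "a < b" and m: "m \<ge> 1" and x: "x \<in> {a..b}"
    and F: "continuous_on {a..b} F" "F a = 0" and G: "continuous_on {a..b} G" "G a = 0"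
  shows "RL_fun m a (\<lambda>y. \<alpha> * F y + \<beta> * G y) x = \<alpha> * RL_fun m a F x + \<beta> * RL_fun m a G x"
proof -
  obtain I where I: "has_RS_integral F (\<lambda>t. rl_kernel m (x - t)) a x I" using RS_exists[OF ab m F x] by blast
  obtain J where J: "has_RS_integral G (\<lambda>t. rl_kernel m (x - t)) a x J" using RS_exists[OF ab m G x] by blast
  have ax: "a \<le> x" using x by simp
  show ?thesis
    unfolding RL_fun_eq[OF I ax] RL_fun_eq[OF J ax] RL_fun_eq[OF has_RS_lin[OF I J, of \<alpha> \<beta>] ax]
    by (simp add: algebra_simps)
qed

lemma RL_fun_bound:
  assumes ab: "a < b" and m: "m \<ge> 1" and x: "x \<in> {a..b}"
    and F: "continuous_on {a..b} F" "F a = 0" and M: "\<forall>s\<in>{a..b}. \<bar>F s\<bar> \<le> M"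
  shows "\<bar>RL_fun m a F x\<bar> \<le> (1 + (b - a) powr (m - 1)) / Gamma m * M"
proof -
  obtain I where I: "has_RS_integral F (\<lambda>t. rl_kernel m (x - t)) a x I" using RS_exists[OF ab m F x] by blast
  have ax: "a \<le> x" using x by simp
  have M0: "M \<ge> 0" using M ab by force
  have "\<bar>I\<bar> \<le> M * (rl_kernel m (x - a) - rl_kernel m (x - x))"
    by (rule has_RS_bound[OF I ax]) (use M x kern_mono[OF m] in auto)
  also have "\<dots> \<le> M * (b - a) powr (m - 1)"
    using kern_var[OF m ax _ ab] x M0 by (intro mult_left_mono) auto
  finally have bI: "\<bar>I\<bar> \<le> M * (b - a) powr (m - 1)" .
  have "\<bar>F x * rl_kernel m 0\<bar> \<le> M * 1"
    unfolding abs_mult using M x kern0_abs M0 by (intro mult_mono) auto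
  hence "\<bar>F x * rl_kernel m 0 - I\<bar> \<le> (1 + (b - a) powr (m - 1)) * M" using bI by (simp add: algebra_simps)
  moreover have "Gamma m > 0" using m by simp
  ultimately show ?thesis
    using RL_fun_eq[OF I ax] by (simp add: abs_mult divide_right_mono mult.commute)
qed

lemma prim_DHK:
  assumes "g absolutely_integrable_on {a..b}"
  shows "prim a g \<in> DHK a b"
proof -
  have "g integrable_on {a..b}" using assms absint_integrable by blast
  hence "continuous_on {a..b} (\<lambda>x. integral {a..x} g)" by (rule indefinite_integral_continuous_1)
  thus ?thesis unfolding DHK_def prim_def by simp
qed

lemma RL_L1_eq:
  assumes ab: "a < b" and m: "m \<ge> 1" and x: "x \<in> {a..b}" and g: "g absolutely_integrable_on {a..b}"
  shows "RL_L1 m a g x = RL_fun m a (prim a g) x"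
proof -
  have ax: "a \<le> x" using x by simp
  have gx: "g absolutely_integrable_on {a..x}"
    using g absolutely_integrable_on_subinterval x by fastforce
  have "has_RS_integral (\<lambda>s. integral {a..s} g) (\<lambda>t. rl_kernel m (x - t)) a x
      (integral {a..x} g * rl_kernel m (x - x) - integral {a..x} (\<lambda>s. rl_kernel m (x - s) * g s))"
    by (intro has_RS_ibp kern_cont m ax gx)
  hence "has_RS_integral (prim a g) (\<lambda>t. rl_kernel m (x - t)) a x
      (prim a g x * rl_kernel m 0 - integral {a..x} (\<lambda>s. rl_kernel m (x - s) * g s))"
    by (simp add: prim_def[abs_def])
  from RL_fun_eq[OF this ax] show ?thesis unfolding RL_L1_def by simp
qed

lemma psi_cont: "m > 1 \<Longrightarrow> continuous_on UNIV (\<lambda>u::real. (max u 0) powr (m - 1))"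
  by (intro continuous_on_powr' continuous_intros) auto

lemma RL_L1_cont:
  assumes ab: "a < b" and m: "m > 1" and h: "continuous_on UNIV h"
  shows "continuous_on {a..b} (RL_L1 m a h)"
proof -
  define \<psi> where "\<psi> = (\<lambda>u::real. (max u 0) powr (m - 1))"
  have eq: "RL_L1 m a h x = (1 / Gamma m) * integral {a..b} (\<lambda>t. \<psi> (x - t) * h t)" if x: "x \<in> {a..b}" for x
  proof -
    have c: "continuous_on {a..b} (\<lambda>t. \<psi> (x - t) * h t)"
      unfolding \<psi>_def using m
      by (intro continuous_intros continuous_on_powr' continuous_on_subset[OF h]) auto
    hence "(\<lambda>t. \<psi> (x - t) * h t) integrable_on {a..b}" by (rule integrable_continuous_interval)
    hence "integral {a..x} (\<lambda>t. \<psi> (x - t) * h t) + integral {x..b} (\<lambda>t. \<psi> (x - t) * h t)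
         = integral {a..b} (\<lambda>t. \<psi> (x - t) * h t)"
      using x by (intro Henstock_Kurzweil_Integration.integral_combine) auto
    moreover have "integral {x..b} (\<lambda>t. \<psi> (x - t) * h t) = integral {x..b} (\<lambda>t. 0)"
      by (rule integral_cong) (auto simp: \<psi>_def max_def)
    moreover have "integral {a..x} (\<lambda>t. \<psi> (x - t) * h t) = integral {a..x} (\<lambda>t. rl_kernel m (x - t) * h t)"
      by (rule integral_cong) (use m in \<open>auto simp: \<psi>_def rl_kernel_pos\<close>)
    ultimately show ?thesis unfolding RL_L1_def by simp
  qed
  have "continuous_on {a..b} (\<lambda>x. integral (cbox a b) (\<lambda>t. \<psi> (x - t) * h t))"
  proof (rule integral_continuous_on_param)
    have "continuous_on UNIV (\<lambda>p::real\<times>real. \<psi> (fst p - snd p) * h (snd p))"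
      unfolding \<psi>_def using m
      by (intro continuous_intros continuous_on_powr' continuous_on_compose2[OF h]) auto
    thus "continuous_on ({a..b} \<times> cbox a b) (\<lambda>(x, t). \<psi> (x - t) * h t)"
      by (rule continuous_on_subset[THEN continuous_on_cong[THEN iffD1, rotated 2]]) auto
  qed
  hence "continuous_on {a..b} (\<lambda>x. (1 / Gamma m) * integral {a..b} (\<lambda>t. \<psi> (x - t) * h t))"
    by (intro continuous_intros) (simp add: cbox_interval)
  thus ?thesis by (rule continuous_on_cong[THEN iffD1, rotated 2]) (use eq in auto)
qed

lemma RL_fun_1:
  assumes "a \<le> x"
  shows "RL_fun 1 a F x = F x"
proof -
  have "has_RS_integral F (\<lambda>t. rl_kernel 1 (x - t)) a x 0"
    using has_RS_const[of F 1 a x] by (simp add: rl_kernel_1)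
  from RL_fun_eq[OF this assms] show ?thesis by (simp add: rl_kernel_1)
qed

lemma RL_fun_diff:
  assumes ab: "a < b" and m: "m \<ge> 1" and x: "x \<in> {a..b}"
    and F: "continuous_on {a..b} F" "F a = 0" and G: "continuous_on {a..b} G" "G a = 0"
  shows "RL_fun m a F x - RL_fun m a G x = RL_fun m a (\<lambda>y. F y - G y) x"
  using RL_fun_lin[OF ab m x F G, of 1 "-1"] by simp

lemma RL_fun_cont:
  assumes ab: "a < b" and m: "m \<ge> 1" and F: "continuous_on {a..b} F" "F a = 0"
  shows "continuous_on {a..b} (RL_fun m a F)"
proof (cases "m = 1")
  case True
  show ?thesis using F(1) by (rule continuous_on_cong[THEN iffD1, rotated 2]) (use True RL_fun_1 in auto)
next
  case False
  hence m1: "m > 1" using m by simp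
  define C where "C = (1 + (b - a) powr (m - 1)) / Gamma m"
  obtain gs where gs1: "\<forall>j. continuous_on UNIV (gs j)"
    and gs2: "\<forall>j. \<forall>s\<in>{a..b}. \<bar>integral {a..s} (gs j) - F s\<bar> \<le> inverse (real (Suc j))"
    using approx_seq[OF F less_imp_le[OF ab]] by blast
  have gabs: "gs j absolutely_integrable_on {a..b}" for j
    using gs1 continuous_on_subset absolutely_integrable_continuous_real by blast
  have Gd: "prim a (gs j) \<in> DHK a b" for j using prim_DHK[OF gabs] .
  have Gc: "continuous_on {a..b} (prim a (gs j))" "prim a (gs j) a = 0" for j
    using Gd[of j] unfolding DHK_def by auto
  have cj: "continuous_on {a..b} (RL_fun m a (prim a (gs j)))" for j
  proof -
    have "continuous_on {a..b} (RL_L1 m a (gs j))" using RL_L1_cont[OF ab m1] gs1 by blast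
    thus ?thesis by (rule continuous_on_cong[THEN iffD1, rotated 2]) (use RL_L1_eq[OF ab m _ gabs] in auto)
  qed
  have ul: "uniform_limit {a..b} (\<lambda>j. RL_fun m a (prim a (gs j))) (RL_fun m a F) sequentially"
    unfolding uniform_limit_iff
  proof (intro allI impI)
    fix e :: real assume e: "e > 0"
    have "(\<lambda>j. C * inverse (real (Suc j))) \<longlonglongrightarrow> C * 0"
      by (intro tendsto_mult tendsto_const LIMSEQ_inverse_real_of_nat)
    hence ev: "eventually (\<lambda>j. C * inverse (real (Suc j)) < e) sequentially"
      using e by (intro order_tendstoD(2)) auto
    show "\<forall>\<^sub>F j in sequentially. \<forall>x\<in>{a..b}. dist (RL_fun m a (prim a (gs j)) x) (RL_fun m a F x) < e"
      using ev
    proof eventually_elim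
      case (elim j)
      show ?case
      proof
        fix x assume x: "x \<in> {a..b}"
        have "dist (RL_fun m a (prim a (gs j)) x) (RL_fun m a F x) = \<bar>RL_fun m a (\<lambda>y. prim a (gs j) y - F y) x\<bar>"
          using RL_fun_diff[OF ab m x Gc F] by (simp add: dist_real_def)
        also have "\<dots> \<le> C * inverse (real (Suc j))"
          unfolding C_def
          by (rule RL_fun_bound[OF ab m x]) (use Gc F gs2 in \<open>auto intro!: continuous_intros simp: prim_def\<close>)
        also have "\<dots> < e" by fact
        finally show "dist (RL_fun m a (prim a (gs j)) x) (RL_fun m a F x) < e" .
      qed
    qed
  qed
  show ?thesis
    by (rule uniform_limit_theorem[OF _ ul]) (use cj in auto)
qed

lemma sigma_finite_lebesgue: "sigma_finite_measure (lebesgue :: real measure)"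
proof -
  obtain A :: "real set set" where A: "countable A" "A \<subseteq> sets lborel" "\<Union>A = space lborel"
      "\<forall>a\<in>A. emeasure lborel a \<noteq> \<infinity>"
    using sigma_finite_measure.sigma_finite_countable[OF sigma_finite_lborel] by blast
  show ?thesis
    unfolding sigma_finite_measure_def
    by (intro exI[of _ A]) (use A in \<open>auto simp: main_part_sets\<close>)
qed

lemma pair_leb: "pair_sigma_finite (lebesgue :: real measure) (lebesgue :: real measure)"
  unfolding pair_sigma_finite_def using sigma_finite_lebesgue by simp

lemma kn_meas: "rl_kernel n \<in> borel_measurable borel"
  unfolding rl_kernel_def by measurable

lemma kern_int:
  assumes n: "0 < n" and tx: "t \<le> x"
  shows "((\<lambda>s. rl_kernel n (s - t)) has_integral ((x - t) powr n / n)) {t..x}"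
proof -
  have "((\<lambda>s. (s - t) powr (n - 1)) has_integral ((x - t) powr n / n - (t - t) powr n / n)) {t..x}"
  proof (rule fundamental_theorem_of_calculus_interior[OF tx])
    show "continuous_on {t..x} (\<lambda>s. (s - t) powr n / n)"
      using n by (intro continuous_intros continuous_on_powr') auto
    fix s assume s: "s \<in> {t<..<x}"
    have "((\<lambda>s. (s - t) powr n / n) has_real_derivative (n * (s - t) powr (n - 1) / n)) (at s)"
      using s by (auto intro!: derivative_eq_intros)
    thus "((\<lambda>s. (s - t) powr n / n) has_vector_derivative (s - t) powr (n - 1)) (at s)"
      using n by (simp add: has_real_derivative_iff_has_vector_derivative)
  qed
  hence h: "((\<lambda>s. (s - t) powr (n - 1)) has_integral ((x - t) powr n / n)) {t..x}" by simp
  have eq: "\<And>s. s \<in> {t..x} - {t} \<Longrightarrow> rl_kernel n (s - t) = (s - t) powr (n - 1)"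
    by (auto simp: rl_kernel_def)
  show ?thesis
    using has_integral_spike[OF negligible_sing[of t], of "{t..x}" "\<lambda>s. rl_kernel n (s - t)", OF eq h] .
qed

lemma kern_nonneg: "0 \<le> rl_kernel n u"
  by (simp add: rl_kernel_def)

lemma kern_setint:
  assumes n: "0 < n" and tx: "t \<le> x"
  shows "set_integrable lebesgue {t..x} (\<lambda>s. rl_kernel n (s - t))"
    "(LINT s:{t..x}|lebesgue. rl_kernel n (s - t)) = (x - t) powr n / n"
proof -
  have hi: "((\<lambda>s. rl_kernel n (s - t)) has_integral ((x - t) powr n / n)) {t..x}" by (rule kern_int[OF n tx])
  show si: "set_integrable lebesgue {t..x} (\<lambda>s. rl_kernel n (s - t))"
    using hi kern_nonneg by (intro nonnegative_absolutely_integrable_1) (auto simp: has_integral_integrable)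
  show "(LINT s:{t..x}|lebesgue. rl_kernel n (s - t)) = (x - t) powr n / n"
    using set_lebesgue_integral_eq_integral(2)[OF si] hi by (simp add: integral_unique)
qed

definition fk :: "real \<Rightarrow> real \<Rightarrow> real \<Rightarrow> (real \<Rightarrow> real) \<Rightarrow> real \<Rightarrow> real \<Rightarrow> real" where
  "fk a x n \<phi> t s = (if a \<le> t \<and> t \<le> s \<and> s \<le> x then rl_kernel n (s - t) * \<phi> t else 0)"

lemma fk_inner:
  assumes n: "0 < n"
  shows "integrable lebesgue (\<lambda>s. fk a x n \<phi> t s)"
    "(\<integral>s. fk a x n \<phi> t s \<partial>lebesgue) = (if a \<le> t \<and> t \<le> x then \<phi> t * ((x - t) powr n / n) else 0)"
proof -
  have "integrable lebesgue (\<lambda>s. fk a x n \<phi> t s) \<and>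
    (\<integral>s. fk a x n \<phi> t s \<partial>lebesgue) = (if a \<le> t \<and> t \<le> x then \<phi> t * ((x - t) powr n / n) else 0)"
  proof (cases "a \<le> t \<and> t \<le> x")
    case True
    have eq: "(\<lambda>s. fk a x n \<phi> t s) = (\<lambda>s. \<phi> t * (indicator {t..x} s *\<^sub>R rl_kernel n (s - t)))"
      using True by (auto simp: fk_def indicator_def fun_eq_iff)
    have si: "set_integrable lebesgue {t..x} (\<lambda>s. rl_kernel n (s - t))" using kern_setint(1)[OF n] True by auto
    have li: "(LINT s:{t..x}|lebesgue. rl_kernel n (s - t)) = (x - t) powr n / n"
      using kern_setint(2)[OF n] True by auto
    have "integrable lebesgue (\<lambda>s. \<phi> t * (indicator {t..x} s *\<^sub>R rl_kernel n (s - t)))"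
      using si unfolding set_integrable_def by (intro integrable_mult_right) auto
    moreover have "(\<integral>s. \<phi> t * (indicator {t..x} s *\<^sub>R rl_kernel n (s - t)) \<partial>lebesgue) = \<phi> t * ((x - t) powr n / n)"
      using li by (simp add: set_lebesgue_integral_def)
    ultimately show ?thesis unfolding eq using True by simp
  next
    case False
    have eq: "(\<lambda>s. fk a x n \<phi> t s) = (\<lambda>s. 0)" using False by (auto simp: fk_def fun_eq_iff)
    show ?thesis unfolding eq using False by auto
  qed
  thus "integrable lebesgue (\<lambda>s. fk a x n \<phi> t s)"
    "(\<integral>s. fk a x n \<phi> t s \<partial>lebesgue) = (if a \<le> t \<and> t \<le> x then \<phi> t * ((x - t) powr n / n) else 0)"
    by auto
qed

lemma fk_meas:
  assumes \<phi>: "\<phi> \<in> borel_measurable lebesgue"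
  shows "(\<lambda>(t, s). fk a x n \<phi> t s) \<in> borel_measurable (lebesgue \<Otimes>\<^sub>M lebesgue)"
proof -
  have m1[measurable]: "(\<lambda>p::real\<times>real. fst p) \<in> borel_measurable (lebesgue \<Otimes>\<^sub>M lebesgue)"
    using measurable_compose[OF measurable_fst id_borel_measurable_lebesgue] by (simp add: id_def)
  have m2[measurable]: "(\<lambda>p::real\<times>real. snd p) \<in> borel_measurable (lebesgue \<Otimes>\<^sub>M lebesgue)"
    using measurable_compose[OF measurable_snd id_borel_measurable_lebesgue] by (simp add: id_def)
  have m3[measurable]: "(\<lambda>p::real\<times>real. \<phi> (fst p)) \<in> borel_measurable (lebesgue \<Otimes>\<^sub>M lebesgue)"
    using measurable_compose[OF measurable_fst \<phi>] .
  have m4[measurable]: "(\<lambda>p::real\<times>real. rl_kernel n (snd p - fst p)) \<in> borel_measurable (lebesgue \<Otimes>\<^sub>M lebesgue)"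
    using measurable_compose[OF borel_measurable_diff[OF m2 m1] kn_meas] .
  have "(\<lambda>p::real\<times>real. if a \<le> fst p \<and> fst p \<le> snd p \<and> snd p \<le> x then rl_kernel n (snd p - fst p) * \<phi> (fst p) else 0)
      \<in> borel_measurable (lebesgue \<Otimes>\<^sub>M lebesgue)"
    by measurable
  thus ?thesis by (simp add: fk_def split_beta')
qed

lemma semigroup:
  fixes g :: "real \<Rightarrow> real"
  assumes n: "0 < n" and g: "g absolutely_integrable_on {a..b}" and x: "x \<in> {a..b}"
  shows "integral {a..x} (RL_L1 n a g) = RL_L1 (n + 1) a g x"
proof -
  have ax: "a \<le> x" and xb: "x \<le> b" using x by auto
  define G0 where "G0 = (\<lambda>t. indicator {a..b} t * g t)"
  have G0m: "G0 \<in> borel_measurable lebesgue"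
    using g unfolding set_integrable_def G0_def by (simp add: borel_measurable_integrable)
  have G0g: "G0 t = g t" if "t \<in> {a..b}" for t using that by (simp add: G0_def)
  have gx: "g absolutely_integrable_on {a..x}" using g absolutely_integrable_on_subinterval x by fastforce
  have cw: "continuous_on {a..x} (\<lambda>t. (x - t) powr n / n)"
    using n by (intro continuous_intros continuous_on_powr') auto
  have absfk: "norm (fk a x n G0 t s) = fk a x n (\<lambda>t. \<bar>G0 t\<bar>) t s" for t s
    by (simp add: fk_def abs_mult kern_nonneg)
  have i1: "integrable lebesgue (\<lambda>t. \<integral>s. norm (fk a x n G0 t s) \<partial>lebesgue)"
  proof -
    have "(\<lambda>t. \<bar>g t\<bar>) absolutely_integrable_on {a..x}"
      using absint_abs_integrable[OF gx] by (intro nonnegative_absolutely_integrable_1) auto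
    hence "(\<lambda>t. (x - t) powr n / n * \<bar>g t\<bar>) absolutely_integrable_on {a..x}"
      by (rule cont_mult_absint[OF cw])
    hence "integrable lebesgue (\<lambda>t. indicator {a..x} t *\<^sub>R ((x - t) powr n / n * \<bar>g t\<bar>))"
      unfolding set_integrable_def .
    moreover have "(\<integral>s. norm (fk a x n G0 t s) \<partial>lebesgue) = indicator {a..x} t *\<^sub>R ((x - t) powr n / n * \<bar>g t\<bar>)" for t
      unfolding absfk fk_inner(2)[OF n] using xb by (auto simp: G0_def indicator_def)
    ultimately show ?thesis by simp
  qed
  have fint: "integrable (lebesgue \<Otimes>\<^sub>M lebesgue) (\<lambda>(t, s). fk a x n G0 t s)"
    by (rule pair_sigma_finite.Fubini_integrable[OF pair_leb fk_meas[OF G0m]])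
      (use i1 fk_inner(1)[OF n] in auto)
  have fub: "(\<integral>s. (\<integral>t. fk a x n G0 t s \<partial>lebesgue) \<partial>lebesgue) = (\<integral>t. (\<integral>s. fk a x n G0 t s \<partial>lebesgue) \<partial>lebesgue)"
    by (rule pair_sigma_finite.Fubini_integral[OF pair_leb fint])
  have rhs: "(\<integral>t. (\<integral>s. fk a x n G0 t s \<partial>lebesgue) \<partial>lebesgue) = integral {a..x} (\<lambda>t. (x - t) powr n / n * g t)"
  proof -
    have si: "set_integrable lebesgue {a..x} (\<lambda>t. (x - t) powr n / n * g t)"
      by (rule cont_mult_absint[OF cw gx])
    have "(\<integral>t. (\<integral>s. fk a x n G0 t s \<partial>lebesgue) \<partial>lebesgue) = (LINT t:{a..x}|lebesgue. (x - t) powr n / n * g t)"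
      unfolding fk_inner(2)[OF n] set_lebesgue_integral_def
      by (rule Bochner_Integration.integral_cong) (use xb in \<open>auto simp: G0_def indicator_def\<close>)
    also have "\<dots> = integral {a..x} (\<lambda>t. (x - t) powr n / n * g t)"
      by (rule set_lebesgue_integral_eq_integral(2)[OF si])
    finally show ?thesis .
  qed
  define \<Phi> where "\<Phi> = (\<lambda>s. \<integral>t. fk a x n G0 t s \<partial>lebesgue)"
  have \<Phi>int: "integrable lebesgue \<Phi>"
    unfolding \<Phi>_def by (rule pair_sigma_finite.integrable_snd[OF pair_leb fint])
  have ae: "AE s in lebesgue. integrable lebesgue (\<lambda>t. fk a x n G0 t s)"
    by (rule pair_sigma_finite.AE_integrable_snd[OF pair_leb fint])
  have \<Phi>0: "\<Phi> s = 0" if "s \<notin> {a..x}" for s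
  proof -
    have "(\<lambda>t. fk a x n G0 t s) = (\<lambda>t. 0)" using that by (auto simp: fk_def fun_eq_iff)
    thus ?thesis unfolding \<Phi>_def by simp
  qed
  have \<Phi>eq: "\<Phi> s = Gamma n * RL_L1 n a g s"
    if s: "s \<in> {a..x}" and isi: "integrable lebesgue (\<lambda>t. fk a x n G0 t s)" for s
  proof -
    have eq: "(\<lambda>t. fk a x n G0 t s) = (\<lambda>t. indicator {a..s} t *\<^sub>R (rl_kernel n (s - t) * g t))"
      using s xb by (auto simp: fk_def G0_def indicator_def fun_eq_iff)
    have si: "set_integrable lebesgue {a..s} (\<lambda>t. rl_kernel n (s - t) * g t)"
      using isi unfolding eq set_integrable_def .
    have "\<Phi> s = (LINT t:{a..s}|lebesgue. rl_kernel n (s - t) * g t)"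
      unfolding \<Phi>_def eq set_lebesgue_integral_def ..
    also have "\<dots> = integral {a..s} (\<lambda>t. rl_kernel n (s - t) * g t)"
      by (rule set_lebesgue_integral_eq_integral(2)[OF si])
    finally show ?thesis unfolding RL_L1_def using Gamma_real_pos[OF n] by simp
  qed
  obtain N where N: "{s \<in> space lebesgue. \<not> integrable lebesgue (\<lambda>t. fk a x n G0 t s)} \<subseteq> N"
    "emeasure lebesgue N = 0" "N \<in> sets lebesgue"
    using ae by (rule AE_E)
  have negN: "negligible N" using N(2,3) by (simp add: negligible_iff_null_sets null_setsI)
  have "(\<Phi> has_integral (\<integral>s. \<Phi> s \<partial>lebesgue)) UNIV"
    by (rule has_integral_integral_lebesgue[OF \<Phi>int])
  moreover have "\<Phi> = (\<lambda>s. if s \<in> {a..x} then \<Phi> s else 0)" using \<Phi>0 by auto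
  ultimately have "(\<Phi> has_integral (\<integral>s. \<Phi> s \<partial>lebesgue)) {a..x}"
    using has_integral_restrict_UNIV[of "{a..x}" \<Phi>] by simp
  hence "((\<lambda>s. Gamma n * RL_L1 n a g s) has_integral (\<integral>s. \<Phi> s \<partial>lebesgue)) {a..x}"
  proof (rule has_integral_spike[OF negN, rotated])
    fix s assume s: "s \<in> {a..x} - N"
    hence "integrable lebesgue (\<lambda>t. fk a x n G0 t s)" using N(1) by auto
    thus "Gamma n * RL_L1 n a g s = \<Phi> s" using \<Phi>eq s by auto
  qed
  hence "((\<lambda>s. (1 / Gamma n) * (Gamma n * RL_L1 n a g s)) has_integral (1 / Gamma n) * (\<integral>s. \<Phi> s \<partial>lebesgue)) {a..x}"
    by (rule has_integral_mult_right)
  moreover have "Gamma n > 0" using n by simp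
  ultimately have "(RL_L1 n a g has_integral (1 / Gamma n) * (\<integral>s. \<Phi> s \<partial>lebesgue)) {a..x}"
    by simp
  hence "integral {a..x} (RL_L1 n a g) = (1 / Gamma n) * integral {a..x} (\<lambda>t. (x - t) powr n / n * g t)"
    using fub rhs unfolding \<Phi>_def by (simp add: integral_unique)
  also have "\<dots> = RL_L1 (n + 1) a g x"
  proof -
    have G1: "Gamma (n + 1) = n * Gamma n" using n by (intro Gamma_plus1) (auto simp: nonpos_Ints_def)
    have "integral {a..x} (\<lambda>t. (x - t) powr n / n * g t) = integral {a..x} (\<lambda>t. (1 / n) * (rl_kernel (n + 1) (x - t) * g t))"
      by (rule integral_cong) (use n in \<open>auto simp: rl_kernel_pos\<close>)
    thus ?thesis unfolding RL_L1_def G1 using n by (auto simp: mult.commute)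
  qed
  finally show ?thesis .
qed

lemma alex_le:
  assumes "a \<le> b" "\<forall>x\<in>{a..b}. \<bar>F x\<bar> \<le> M" shows "alex_norm a b F \<le> M"
  unfolding alex_norm_def using assms by (intro cSUP_least) auto

lemma alex_nonneg:
  assumes "a \<le> b" "\<forall>x\<in>{a..b}. \<bar>F x\<bar> \<le> M" shows "0 \<le> alex_norm a b F"
proof -
  have "bdd_above ((\<lambda>x. \<bar>F x\<bar>) ` {a..b})" using assms(2) by (intro bdd_aboveI2) auto
  hence "\<bar>F a\<bar> \<le> alex_norm a b F" unfolding alex_norm_def using assms(1) by (intro cSUP_upper) auto
  thus ?thesis by linarith
qed

lemma alex_ge:
  assumes "continuous_on {a..b} F" "x \<in> {a..b}" shows "\<bar>F x\<bar> \<le> alex_norm a b F"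
proof -
  have "compact ((\<lambda>x. \<bar>F x\<bar>) ` {a..b})"
    using assms(1) by (intro compact_continuous_image continuous_intros) auto
  hence "bdd_above ((\<lambda>x. \<bar>F x\<bar>) ` {a..b})" by (intro bounded_imp_bdd_above compact_imp_bounded)
  thus ?thesis unfolding alex_norm_def using assms(2) by (intro cSUP_upper) auto
qed

lemma alex_cong: "(\<forall>x\<in>{a..b}. F x = G x) \<Longrightarrow> alex_norm a b F = alex_norm a b G"
  unfolding alex_norm_def by (intro SUP_cong) auto

lemma DHK_iff: "F \<in> DHK a b \<longleftrightarrow> continuous_on {a..b} F \<and> F a = 0"
  by (simp add: DHK_def)

lemma DHK_lin: "F \<in> DHK a b \<Longrightarrow> G \<in> DHK a b \<Longrightarrow> (\<lambda>y. \<alpha> * F y + \<beta> * G y) \<in> DHK a b"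
  unfolding DHK_iff by (auto intro!: continuous_intros)

lemma DHK_diff: "F \<in> DHK a b \<Longrightarrow> G \<in> DHK a b \<Longrightarrow> (\<lambda>y. F y - G y) \<in> DHK a b"
  unfolding DHK_iff by (auto intro!: continuous_intros)

lemma abstract_conv:
  assumes ab: "a < b"
    and lin: "\<And>F G \<alpha> \<beta> x. F \<in> DHK a b \<Longrightarrow> G \<in> DHK a b \<Longrightarrow> x \<in> {a..b} \<Longrightarrow>
        T (\<lambda>y. \<alpha> * F y + \<beta> * G y) x = \<alpha> * T F x + \<beta> * T G x"
    and bnd: "\<And>F x. F \<in> DHK a b \<Longrightarrow> x \<in> {a..b} \<Longrightarrow> \<bar>T F x\<bar> \<le> K * alex_norm a b F"
    and Fs: "\<forall>k. Fs k \<in> DHK a b" and F: "F \<in> DHK a b"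
    and lim: "(\<lambda>k. alex_norm a b (\<lambda>x. Fs k x - F x)) \<longlonglongrightarrow> 0"
  shows "(\<lambda>k. alex_norm a b (\<lambda>x. T (Fs k) x - T F x)) \<longlonglongrightarrow> 0"
proof -
  have d: "T (Fs k) x - T F x = T (\<lambda>y. Fs k y - F y) x" if "x \<in> {a..b}" for k x
    using lin[OF Fs[rule_format] F that, where \<alpha>=1 and \<beta>="-1"] by simp
  have b: "\<bar>T (Fs k) x - T F x\<bar> \<le> K * alex_norm a b (\<lambda>y. Fs k y - F y)" if "x \<in> {a..b}" for k x
    using d[OF that] bnd[OF DHK_diff[OF Fs[rule_format] F] that] by simp
  show ?thesis
  proof (rule real_tendsto_sandwich[of "\<lambda>_. 0" _ _ "\<lambda>k. K * alex_norm a b (\<lambda>y. Fs k y - F y)"])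
    show "\<forall>\<^sub>F k in sequentially. 0 \<le> alex_norm a b (\<lambda>x. T (Fs k) x - T F x)"
      using alex_nonneg b ab by (intro always_eventually allI) (meson less_imp_le)
    show "\<forall>\<^sub>F k in sequentially. alex_norm a b (\<lambda>x. T (Fs k) x - T F x) \<le> K * alex_norm a b (\<lambda>y. Fs k y - F y)"
      using alex_le b ab by (intro always_eventually allI) (meson less_imp_le)
    show "(\<lambda>_. 0) \<longlonglongrightarrow> (0::real)" by simp
    have "(\<lambda>k. K * alex_norm a b (\<lambda>y. Fs k y - F y)) \<longlonglongrightarrow> K * 0"
      by (intro tendsto_mult tendsto_const lim)
    thus "(\<lambda>k. K * alex_norm a b (\<lambda>y. Fs k y - F y)) \<longlonglongrightarrow> 0" by simp
  qed
qed

lemma core_lin: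
  assumes ab: "a < b" and m: "m \<ge> 1" and F: "F \<in> DHK a b" and G: "G \<in> DHK a b" and x: "x \<in> {a..b}"
  shows "RL_fun m a (\<lambda>y. \<alpha> * F y + \<beta> * G y) x = \<alpha> * RL_fun m a F x + \<beta> * RL_fun m a G x"
  using F G by (intro RL_fun_lin[OF ab m x]) (auto simp: DHK_iff)

lemma core_bnd:
  assumes ab: "a < b" and m: "m \<ge> 1" and F: "F \<in> DHK a b" and x: "x \<in> {a..b}"
  shows "\<bar>RL_fun m a F x\<bar> \<le> (1 + (b - a) powr (m - 1)) / Gamma m * alex_norm a b F"
  using F alex_ge[of a b F] by (intro RL_fun_bound[OF ab m x]) (auto simp: DHK_iff)

lemma core_cont:
  assumes ab: "a < b" and m: "m \<ge> 1" and F: "F \<in> DHK a b"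
  shows "continuous_on {a..b} (RL_fun m a F)"
  using F by (intro RL_fun_cont[OF ab m]) (auto simp: DHK_iff)

lemma core_at_a:
  assumes F: "F \<in> DHK a b"
  shows "RL_fun m a F a = 0"
  using RL_fun_eq[OF has_RS_same[of F "\<lambda>t. rl_kernel m (a - t)" a] order_refl] F
  by (simp add: DHK_iff)

lemma core_DHK:
  assumes ab: "a < b" and m: "m \<ge> 1" and F: "F \<in> DHK a b"
  shows "RL_fun m a F \<in> DHK a b"
  using core_cont[OF ab m F] core_at_a[OF F] by (simp add: DHK_iff)

lemma RL_prim_ge1: "1 \<le> n \<Longrightarrow> RL_prim n a b F = prim a (RL_fun n a F)"
  unfolding RL_prim_def by simp

lemma ge1_int:
  assumes ab: "a < b" and n: "1 \<le> n" and F: "F \<in> DHK a b"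
  shows "RL_fun n a F integrable_on {a..b}"
  by (rule integrable_continuous_interval[OF core_cont[OF ab n F]])

lemma ge1_DHK:
  assumes ab: "a < b" and n: "1 \<le> n" and F: "F \<in> DHK a b"
  shows "RL_prim n a b F \<in> DHK a b"
  unfolding RL_prim_ge1[OF n] DHK_iff prim_def
  using indefinite_integral_continuous_1[OF ge1_int[OF ab n F]] by simp

lemma ge1_lin:
  assumes ab: "a < b" and n: "1 \<le> n" and F: "F \<in> DHK a b" and G: "G \<in> DHK a b" and x: "x \<in> {a..b}"
  shows "RL_prim n a b (\<lambda>y. \<alpha> * F y + \<beta> * G y) x = \<alpha> * RL_prim n a b F x + \<beta> * RL_prim n a b G x"
proof -
  have iF: "RL_fun n a F integrable_on {a..x}" by (rule sub_int[OF ge1_int[OF ab n F]]) (use x in auto)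
  have iG: "RL_fun n a G integrable_on {a..x}" by (rule sub_int[OF ge1_int[OF ab n G]]) (use x in auto)
  have "integral {a..x} (RL_fun n a (\<lambda>y. \<alpha> * F y + \<beta> * G y))
      = integral {a..x} (\<lambda>y. \<alpha> * RL_fun n a F y + \<beta> * RL_fun n a G y)"
  proof (rule integral_cong)
    fix y assume "y \<in> {a..x}"
    hence "y \<in> {a..b}" using x by auto
    thus "RL_fun n a (\<lambda>y. \<alpha> * F y + \<beta> * G y) y = \<alpha> * RL_fun n a F y + \<beta> * RL_fun n a G y"
      by (rule core_lin[OF ab n F G])
  qed
  also have "\<dots> = \<alpha> * integral {a..x} (RL_fun n a F) + \<beta> * integral {a..x} (RL_fun n a G)"
    using integral_add[OF integrable_on_mult_right[OF iF, of \<alpha>] integrable_on_mult_right[OF iG, of \<beta>]]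
    by (simp only: integral_mult_right)
  finally show ?thesis unfolding RL_prim_ge1[OF n] prim_def .
qed

lemma ge1_bnd:
  assumes ab: "a < b" and n: "1 \<le> n" and F: "F \<in> DHK a b" and x: "x \<in> {a..b}"
  shows "\<bar>RL_prim n a b F x\<bar> \<le> ((b - a) * ((1 + (b - a) powr (n - 1)) / Gamma n)) * alex_norm a b F"
proof -
  define C where "C = (1 + (b - a) powr (n - 1)) / Gamma n"
  have C0: "C \<ge> 0" unfolding C_def using n by simp
  have A0: "alex_norm a b F \<ge> 0"
    using alex_nonneg[of a b F "alex_norm a b F"] alex_ge[of a b F] F ab by (auto simp: DHK_iff)
  have iF: "RL_fun n a F integrable_on {a..x}" by (rule sub_int[OF ge1_int[OF ab n F]]) (use x in auto)
  have "norm (integral {a..x} (RL_fun n a F)) \<le> integral {a..x} (\<lambda>_. C * alex_norm a b F)"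
  proof (rule integral_norm_bound_integral[OF iF])
    show "(\<lambda>_. C * alex_norm a b F) integrable_on {a..x}"
      by (rule integrable_continuous_interval) (rule continuous_on_const)
    fix y assume "y \<in> {a..x}"
    thus "norm (RL_fun n a F y) \<le> C * alex_norm a b F"
      using core_bnd[OF ab n F, of y] x unfolding C_def by auto
  qed
  also have "\<dots> = (x - a) * (C * alex_norm a b F)" using x by simp
  also have "\<dots> \<le> (b - a) * (C * alex_norm a b F)"
    using x C0 A0 by (intro mult_right_mono) auto
  finally show ?thesis unfolding RL_prim_ge1[OF n] prim_def C_def by (simp add: mult_ac)
qed

lemma ge1_iv:
  assumes ab: "a < b" and n: "1 \<le> n" and F: "F \<in> DHK a b"
    and gs: "\<forall>k. gs k absolutely_integrable_on {a..b}"
    and lim: "(\<lambda>k. alex_norm a b (\<lambda>x. prim a (gs k) x - F x)) \<longlonglongrightarrow> 0"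
  shows "(\<lambda>k. alex_norm a b (\<lambda>x. prim a (RL_L1 n a (gs k)) x - RL_prim n a b F x)) \<longlonglongrightarrow> 0"
    "uniform_limit {a..b} (\<lambda>k. RL_L1 n a (gs k)) (RL_fun n a F) sequentially"
proof -
  have Gd: "prim a (gs k) \<in> DHK a b" for k using prim_DHK gs by blast
  have eq: "prim a (RL_L1 n a (gs k)) x = RL_prim n a b (prim a (gs k)) x" if x: "x \<in> {a..b}" for k x
    unfolding RL_prim_ge1[OF n] prim_def[of a "RL_L1 n a (gs k)"] prim_def[of a "RL_fun n a (prim a (gs k))"]
    by (rule integral_cong) (use RL_L1_eq[OF ab n _ gs[rule_format]] x in auto)
  have "(\<lambda>k. alex_norm a b (\<lambda>x. RL_prim n a b (prim a (gs k)) x - RL_prim n a b F x)) \<longlonglongrightarrow> 0"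
    by (rule abstract_conv[OF ab _ _ _ F lim, where K = "(b - a) * ((1 + (b - a) powr (n - 1)) / Gamma n)"])
      (use ge1_lin[OF ab n] ge1_bnd[OF ab n] Gd in auto)
  moreover have "alex_norm a b (\<lambda>x. prim a (RL_L1 n a (gs k)) x - RL_prim n a b F x)
      = alex_norm a b (\<lambda>x. RL_prim n a b (prim a (gs k)) x - RL_prim n a b F x)" for k
    by (rule alex_cong) (use eq in auto)
  ultimately show "(\<lambda>k. alex_norm a b (\<lambda>x. prim a (RL_L1 n a (gs k)) x - RL_prim n a b F x)) \<longlonglongrightarrow> 0"
    by simp
  define C where "C = (1 + (b - a) powr (n - 1)) / Gamma n"
  show "uniform_limit {a..b} (\<lambda>k. RL_L1 n a (gs k)) (RL_fun n a F) sequentially"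
    unfolding uniform_limit_iff
  proof (intro allI impI)
    fix e :: real assume e: "e > 0"
    have "(\<lambda>k. C * alex_norm a b (\<lambda>x. prim a (gs k) x - F x)) \<longlonglongrightarrow> C * 0"
      by (intro tendsto_mult tendsto_const lim)
    hence ev: "eventually (\<lambda>k. C * alex_norm a b (\<lambda>x. prim a (gs k) x - F x) < e) sequentially"
      using e by (intro order_tendstoD(2)) auto
    show "\<forall>\<^sub>F k in sequentially. \<forall>x\<in>{a..b}. dist (RL_L1 n a (gs k) x) (RL_fun n a F x) < e"
      using ev
    proof eventually_elim
      case (elim k)
      show ?case
      proof
        fix x assume x: "x \<in> {a..b}"
        have "RL_L1 n a (gs k) x - RL_fun n a F x = RL_fun n a (\<lambda>y. 1 * prim a (gs k) y + (-1) * F y) x"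
          using RL_L1_eq[OF ab n x gs[rule_format]] core_lin[OF ab n Gd F x, where \<alpha>=1 and \<beta>="-1"] by simp
        hence "dist (RL_L1 n a (gs k) x) (RL_fun n a F x) = \<bar>RL_fun n a (\<lambda>y. prim a (gs k) y - F y) x\<bar>"
          by (simp add: dist_real_def)
        also have "\<dots> \<le> C * alex_norm a b (\<lambda>y. prim a (gs k) y - F y)"
          unfolding C_def by (rule core_bnd[OF ab n DHK_diff[OF Gd F] x])
        also have "\<dots> < e" using elim by simp
        finally show "dist (RL_L1 n a (gs k) x) (RL_fun n a F x) < e" .
      qed
    qed
  qed
qed

lemma frac_eqT:
  assumes ab: "a < b" and n: "0 < n" and g: "g absolutely_integrable_on {a..b}" and x: "x \<in> {a..b}"
  shows "prim a (RL_L1 n a g) x = RL_fun (n + 1) a (prim a g) x"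
  unfolding prim_def[of a "RL_L1 n a g"] semigroup[OF n g x]
  by (rule RL_L1_eq[OF ab _ x g]) (use n in simp)

lemma frac_limit:
  assumes ab: "a < b" and n: "0 < n" and F: "F \<in> DHK a b"
  shows "RL_limit n a b F (RL_fun (n + 1) a F)"
  unfolding RL_limit_def
proof (intro conjI allI impI)
  have m: "1 \<le> n + 1" using n by simp
  show "RL_fun (n + 1) a F \<in> DHK a b" by (rule core_DHK[OF ab m F])
  fix gs :: "nat \<Rightarrow> real \<Rightarrow> real"
  assume h: "(\<forall>k. gs k absolutely_integrable_on {a..b}) \<and>
      (\<lambda>k. alex_norm a b (\<lambda>x. prim a (gs k) x - F x)) \<longlonglongrightarrow> 0"
  hence gs: "\<forall>k. gs k absolutely_integrable_on {a..b}"
    and lim: "(\<lambda>k. alex_norm a b (\<lambda>x. prim a (gs k) x - F x)) \<longlonglongrightarrow> 0" by auto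
  have Gd: "prim a (gs k) \<in> DHK a b" for k using prim_DHK gs by blast
  have "(\<lambda>k. alex_norm a b (\<lambda>x. RL_fun (n + 1) a (prim a (gs k)) x - RL_fun (n + 1) a F x)) \<longlonglongrightarrow> 0"
    by (rule abstract_conv[OF ab _ _ _ F lim, where K = "(1 + (b - a) powr (n + 1 - 1)) / Gamma (n + 1)"])
      (use core_lin[OF ab m] core_bnd[OF ab m] Gd in auto)
  moreover have "alex_norm a b (\<lambda>x. prim a (RL_L1 n a (gs k)) x - RL_fun (n + 1) a F x)
      = alex_norm a b (\<lambda>x. RL_fun (n + 1) a (prim a (gs k)) x - RL_fun (n + 1) a F x)" for k
    by (rule alex_cong) (use frac_eqT[OF ab n gs[rule_format]] in auto)
  ultimately show "(\<lambda>k. alex_norm a b (\<lambda>x. prim a (RL_L1 n a (gs k)) x - RL_fun (n + 1) a F x)) \<longlonglongrightarrow> 0"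
    by simp
qed

lemma frac_unique:
  assumes ab: "a < b" and n: "0 < n" and F: "F \<in> DHK a b" and P: "RL_limit n a b F P"
    and x: "x \<in> {a..b}"
  shows "P x = RL_fun (n + 1) a F x"
proof -
  have m: "1 \<le> n + 1" using n by simp
  define C where "C = (1 + (b - a) powr (n + 1 - 1)) / Gamma (n + 1)"
  have Fc: "continuous_on {a..b} F" "F a = 0" using F by (auto simp: DHK_iff)
  obtain gs where gs1: "\<forall>j. continuous_on UNIV (gs j)"
    and gs2: "\<forall>j. \<forall>s\<in>{a..b}. \<bar>integral {a..s} (gs j) - F s\<bar> \<le> inverse (real (Suc j))"
    using approx_seq[OF Fc less_imp_le[OF ab]] by blast
  have gabs: "gs j absolutely_integrable_on {a..b}" for j
    using gs1 continuous_on_subset absolutely_integrable_continuous_real by blast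
  have Gd: "prim a (gs j) \<in> DHK a b" for j using prim_DHK[OF gabs] .
  have limg: "(\<lambda>j. alex_norm a b (\<lambda>x. prim a (gs j) x - F x)) \<longlonglongrightarrow> 0"
  proof (rule real_tendsto_sandwich[of "\<lambda>_. 0" _ _ "\<lambda>j. inverse (real (Suc j))"])
    have b: "\<forall>s\<in>{a..b}. \<bar>prim a (gs j) s - F s\<bar> \<le> inverse (real (Suc j))" for j
      using gs2 by (simp add: prim_def)
    show "\<forall>\<^sub>F j in sequentially. 0 \<le> alex_norm a b (\<lambda>x. prim a (gs j) x - F x)"
      using alex_nonneg[OF less_imp_le[OF ab] b] by simp
    show "\<forall>\<^sub>F j in sequentially. alex_norm a b (\<lambda>x. prim a (gs j) x - F x) \<le> inverse (real (Suc j))"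
      using alex_le[OF less_imp_le[OF ab] b] by simp
    show "(\<lambda>_. 0) \<longlonglongrightarrow> (0::real)" by simp
    show "(\<lambda>j. inverse (real (Suc j))) \<longlonglongrightarrow> 0" by (rule LIMSEQ_inverse_real_of_nat)
  qed
  have Pd: "P \<in> DHK a b" and limP: "(\<lambda>j. alex_norm a b (\<lambda>x. prim a (RL_L1 n a (gs j)) x - P x)) \<longlonglongrightarrow> 0"
    using P gabs limg unfolding RL_limit_def by auto
  define u where "u j = alex_norm a b (\<lambda>x. prim a (RL_L1 n a (gs j)) x - P x)
      + C * alex_norm a b (\<lambda>x. prim a (gs j) x - F x)" for j
  have ulim: "u \<longlonglongrightarrow> 0 + C * 0"
    unfolding u_def[abs_def] by (intro tendsto_add tendsto_mult tendsto_const limP limg)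
  have ub: "\<bar>P x - RL_fun (n + 1) a F x\<bar> \<le> u j" for j
  proof -
    have eqT: "prim a (RL_L1 n a (gs j)) y = RL_fun (n + 1) a (prim a (gs j)) y" if "y \<in> {a..b}" for y
      by (rule frac_eqT[OF ab n gabs that])
    have ct: "continuous_on {a..b} (\<lambda>y. prim a (RL_L1 n a (gs j)) y - P y)"
    proof -
      have "continuous_on {a..b} (\<lambda>y. RL_fun (n + 1) a (prim a (gs j)) y - P y)"
        using core_cont[OF ab m Gd] Pd by (intro continuous_intros) (auto simp: DHK_iff)
      thus ?thesis by (rule continuous_on_cong[THEN iffD1, rotated 2]) (use eqT in auto)
    qed
    have t1: "\<bar>prim a (RL_L1 n a (gs j)) x - P x\<bar> \<le> alex_norm a b (\<lambda>x. prim a (RL_L1 n a (gs j)) x - P x)"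
      using alex_ge[OF ct x] .
    have "prim a (RL_L1 n a (gs j)) x - RL_fun (n + 1) a F x = RL_fun (n + 1) a (\<lambda>y. 1 * prim a (gs j) y + (-1) * F y) x"
      using eqT[OF x] core_lin[OF ab m Gd F x, where \<alpha>=1 and \<beta>="-1"] by simp
    hence "\<bar>prim a (RL_L1 n a (gs j)) x - RL_fun (n + 1) a F x\<bar> = \<bar>RL_fun (n + 1) a (\<lambda>y. prim a (gs j) y - F y) x\<bar>"
      by simp
    also have "\<dots> \<le> C * alex_norm a b (\<lambda>y. prim a (gs j) y - F y)"
      unfolding C_def by (rule core_bnd[OF ab m DHK_diff[OF Gd F] x])
    finally have t2: "\<bar>prim a (RL_L1 n a (gs j)) x - RL_fun (n + 1) a F x\<bar> \<le> C * alex_norm a b (\<lambda>y. prim a (gs j) y - F y)" .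
    show ?thesis using t1 t2 unfolding u_def by arith
  qed
  have "\<bar>P x - RL_fun (n + 1) a F x\<bar> \<le> 0"
    using LIMSEQ_le_const[OF ulim[simplified], of "\<bar>P x - RL_fun (n + 1) a F x\<bar>"] ub by blast
  thus ?thesis by simp
qed

lemma frac_prim:
  assumes ab: "a < b" and n: "0 < n" "n < 1" and F: "F \<in> DHK a b" and x: "x \<in> {a..b}"
  shows "RL_prim n a b F x = RL_fun (n + 1) a F x"
proof -
  have "\<exists>P. RL_limit n a b F P" using frac_limit[OF ab n(1) F] by blast
  hence "RL_limit n a b F (SOME P. RL_limit n a b F P)" by (rule someI_ex)
  moreover have "RL_prim n a b F = (SOME P. RL_limit n a b F P)"
    unfolding RL_prim_def using n by simp
  ultimately show ?thesis using frac_unique[OF ab n(1) F _ x] by simp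
qed

lemma generic_parts:
  assumes ab: "a < b"
    and TP: "\<And>F x. F \<in> DHK a b \<Longrightarrow> x \<in> {a..b} \<Longrightarrow> RL_prim n a b F x = T F x"
    and lin: "\<And>F G \<alpha> \<beta> x. F \<in> DHK a b \<Longrightarrow> G \<in> DHK a b \<Longrightarrow> x \<in> {a..b} \<Longrightarrow>
        T (\<lambda>y. \<alpha> * F y + \<beta> * G y) x = \<alpha> * T F x + \<beta> * T G x"
    and bnd: "\<And>F x. F \<in> DHK a b \<Longrightarrow> x \<in> {a..b} \<Longrightarrow> \<bar>T F x\<bar> \<le> K * alex_norm a b F"
    and dhk: "\<And>F. F \<in> DHK a b \<Longrightarrow> T F \<in> DHK a b"
  shows "\<forall>F\<in>DHK a b. RL_prim n a b F \<in> DHK a b"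
    and "\<forall>F\<in>DHK a b. \<forall>G\<in>DHK a b. \<forall>\<alpha> \<beta>::real. \<forall>x\<in>{a..b}.
        RL_prim n a b (\<lambda>y. \<alpha> * F y + \<beta> * G y) x = \<alpha> * RL_prim n a b F x + \<beta> * RL_prim n a b G x"
    and "\<exists>C. \<forall>F\<in>DHK a b. alex_norm a b (RL_prim n a b F) \<le> C * alex_norm a b F"
    and "\<forall>(Fs::nat \<Rightarrow> real \<Rightarrow> real) F.
        (\<forall>k. Fs k \<in> DHK a b) \<and> F \<in> DHK a b \<and>
        (\<lambda>k. alex_norm a b (\<lambda>x. Fs k x - F x)) \<longlonglongrightarrow> 0
        \<longrightarrow> (\<lambda>k. alex_norm a b (\<lambda>x. RL_prim n a b (Fs k) x - RL_prim n a b F x)) \<longlonglongrightarrow> 0"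
proof -
  show "\<forall>F\<in>DHK a b. RL_prim n a b F \<in> DHK a b"
  proof
    fix F assume F: "F \<in> DHK a b"
    have "continuous_on {a..b} (T F)" "T F a = 0" using dhk[OF F] by (auto simp: DHK_iff)
    moreover have "\<forall>x\<in>{a..b}. RL_prim n a b F x = T F x" using TP[OF F] by blast
    ultimately show "RL_prim n a b F \<in> DHK a b"
      unfolding DHK_iff using ab by (auto intro: continuous_on_cong[THEN iffD2])
  qed
  show "\<forall>F\<in>DHK a b. \<forall>G\<in>DHK a b. \<forall>\<alpha> \<beta>::real. \<forall>x\<in>{a..b}.
        RL_prim n a b (\<lambda>y. \<alpha> * F y + \<beta> * G y) x = \<alpha> * RL_prim n a b F x + \<beta> * RL_prim n a b G x"
  proof (intro ballI allI)
    fix F G \<alpha> \<beta> x assume F: "F \<in> DHK a b" and G: "G \<in> DHK a b" and x: "x \<in> {a..b}"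
    show "RL_prim n a b (\<lambda>y. \<alpha> * F y + \<beta> * G y) x = \<alpha> * RL_prim n a b F x + \<beta> * RL_prim n a b G x"
      unfolding TP[OF DHK_lin[OF F G] x] TP[OF F x] TP[OF G x] by (rule lin[OF F G x])
  qed
  show "\<exists>C. \<forall>F\<in>DHK a b. alex_norm a b (RL_prim n a b F) \<le> C * alex_norm a b F"
  proof (intro exI[of _ K] ballI)
    fix F assume F: "F \<in> DHK a b"
    have "alex_norm a b (RL_prim n a b F) = alex_norm a b (T F)" by (rule alex_cong) (use TP[OF F] in auto)
    also have "\<dots> \<le> K * alex_norm a b F" by (rule alex_le) (use ab bnd[OF F] in auto)
    finally show "alex_norm a b (RL_prim n a b F) \<le> K * alex_norm a b F" .
  qed
  show "\<forall>(Fs::nat \<Rightarrow> real \<Rightarrow> real) F.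
        (\<forall>k. Fs k \<in> DHK a b) \<and> F \<in> DHK a b \<and>
        (\<lambda>k. alex_norm a b (\<lambda>x. Fs k x - F x)) \<longlonglongrightarrow> 0
        \<longrightarrow> (\<lambda>k. alex_norm a b (\<lambda>x. RL_prim n a b (Fs k) x - RL_prim n a b F x)) \<longlonglongrightarrow> 0"
  proof (intro allI impI)
    fix Fs :: "nat \<Rightarrow> real \<Rightarrow> real" and F
    assume h: "(\<forall>k. Fs k \<in> DHK a b) \<and> F \<in> DHK a b \<and> (\<lambda>k. alex_norm a b (\<lambda>x. Fs k x - F x)) \<longlonglongrightarrow> 0"
    hence Fs: "\<forall>k. Fs k \<in> DHK a b" and F: "F \<in> DHK a b"
      and lim: "(\<lambda>k. alex_norm a b (\<lambda>x. Fs k x - F x)) \<longlonglongrightarrow> 0" by auto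
    have "(\<lambda>k. alex_norm a b (\<lambda>x. T (Fs k) x - T F x)) \<longlonglongrightarrow> 0"
      by (rule abstract_conv[OF ab _ _ Fs F lim, where K = K]) (use lin bnd in auto)
    moreover have "alex_norm a b (\<lambda>x. RL_prim n a b (Fs k) x - RL_prim n a b F x)
        = alex_norm a b (\<lambda>x. T (Fs k) x - T F x)" for k
      by (rule alex_cong) (use TP[OF F] TP[OF Fs[rule_format]] in auto)
    ultimately show "(\<lambda>k. alex_norm a b (\<lambda>x. RL_prim n a b (Fs k) x - RL_prim n a b F x)) \<longlonglongrightarrow> 0"
      by simp
  qed
qed

theorem theorem3p3:
  fixes a b n :: real
  assumes ab: "a < b" and n: "0 \<le> n"
  shows
    \<comment> \<open>(i) J_a^n maps D_HK into D_HK\<close>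
    "(\<forall>F\<in>DHK a b.
        (1 \<le> n \<longrightarrow> RL_fun n a F integrable_on {a..b}) \<and>
        (0 < n \<and> n < 1 \<longrightarrow> (\<exists>P. RL_limit n a b F P)) \<and>
        RL_prim n a b F \<in> DHK a b)
   \<comment> \<open>(ii) linear and bounded\<close>
   \<and> (\<forall>F\<in>DHK a b. \<forall>G\<in>DHK a b. \<forall>\<alpha> \<beta>::real. \<forall>x\<in>{a..b}.
        RL_prim n a b (\<lambda>y. \<alpha> * F y + \<beta> * G y) x
          = \<alpha> * RL_prim n a b F x + \<beta> * RL_prim n a b G x)
   \<and> (\<exists>C. \<forall>F\<in>DHK a b. alex_norm a b (RL_prim n a b F) \<le> C * alex_norm a b F)
   \<comment> \<open>(iii) continuity\<close>
   \<and> (\<forall>(Fs::nat \<Rightarrow> real \<Rightarrow> real) F.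
        (\<forall>k. Fs k \<in> DHK a b) \<and> F \<in> DHK a b \<and>
        (\<lambda>k. alex_norm a b (\<lambda>x. Fs k x - F x)) \<longlonglongrightarrow> 0
        \<longrightarrow> (\<lambda>k. alex_norm a b (\<lambda>x. RL_prim n a b (Fs k) x - RL_prim n a b F x)) \<longlonglongrightarrow> 0)
   \<comment> \<open>(iv) for n \<ge> 1, approximation by L^1 sequences, in D_HK and uniformly\<close>
   \<and> (1 \<le> n \<longrightarrow>
        (\<forall>F\<in>DHK a b. \<forall>gs::nat \<Rightarrow> real \<Rightarrow> real.
          (\<forall>k. gs k absolutely_integrable_on {a..b}) \<and>
          (\<lambda>k. alex_norm a b (\<lambda>x. prim a (gs k) x - F x)) \<longlonglongrightarrow> 0
          \<longrightarrow> (\<lambda>k. alex_norm a b (\<lambda>x. prim a (RL_L1 n a (gs k)) x - RL_prim n a b F x)) \<longlonglongrightarrow> 0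
            \<and> uniform_limit {a..b} (\<lambda>k. RL_L1 n a (gs k)) (RL_fun n a F) sequentially))"
proof -
  consider (z) "n = 0" | (f) "0 < n \<and> n < 1" | (g) "1 \<le> n" using n by linarith
  then show ?thesis
  proof cases
    case z
    have TP: "\<And>F. RL_prim n a b F = F"
      unfolding RL_prim_def using z by simp
    have lin0: "\<And>F G \<alpha> \<beta> x. F \<in> DHK a b \<Longrightarrow> G \<in> DHK a b \<Longrightarrow> x \<in> {a..b} \<Longrightarrow>
        RL_prim n a b (\<lambda>y. \<alpha> * F y + \<beta> * G y) x = \<alpha> * RL_prim n a b F x + \<beta> * RL_prim n a b G x"
      unfolding TP by simp
    have bnd0: "\<And>F x. F \<in> DHK a b \<Longrightarrow> x \<in> {a..b} \<Longrightarrow> \<bar>RL_prim n a b F x\<bar> \<le> 1 * alex_norm a b F"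
      unfolding TP using alex_ge by (simp add: DHK_iff)
    have dhk0: "\<And>F. F \<in> DHK a b \<Longrightarrow> RL_prim n a b F \<in> DHK a b" unfolding TP by simp
    note parts = generic_parts[where T = "RL_prim n a b" and K = 1, OF ab refl lin0 bnd0 dhk0]
    show ?thesis
      apply (intro conjI)
      subgoal
      proof
        fix F assume F: "F \<in> DHK a b"
        have "\<not> 1 \<le> n" "\<not> (0 < n \<and> n < 1)" using z by auto
        thus "(1 \<le> n \<longrightarrow> RL_fun n a F integrable_on {a..b}) \<and>
          (0 < n \<and> n < 1 \<longrightarrow> (\<exists>P. RL_limit n a b F P)) \<and> RL_prim n a b F \<in> DHK a b"
          using parts(1) F by blast
      qed
      subgoal by (rule parts(2))
      subgoal by (rule parts(3))
      subgoal by (rule parts(4))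
      subgoal
      proof -
        have "\<not> 1 \<le> n" using z by auto
        thus ?thesis by blast
      qed
      done
  next
    case f
    have m: "1 \<le> n + 1" using f by simp
    note parts = generic_parts[where T = "RL_fun (n + 1) a" and K = "(1 + (b - a) powr (n + 1 - 1)) / Gamma (n + 1)",
        OF ab frac_prim[OF ab conjunct1[OF f] conjunct2[OF f]] core_lin[OF ab m] core_bnd[OF ab m] core_DHK[OF ab m]]
    have L: "\<forall>F\<in>DHK a b. \<exists>P. RL_limit n a b F P" using frac_limit[OF ab conjunct1[OF f]] by blast
    show ?thesis
      apply (intro conjI)
      subgoal
      proof
        fix F assume F: "F \<in> DHK a b"
        have "\<not> 1 \<le> n" using f by auto
        thus "(1 \<le> n \<longrightarrow> RL_fun n a F integrable_on {a..b}) \<and>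
          (0 < n \<and> n < 1 \<longrightarrow> (\<exists>P. RL_limit n a b F P)) \<and> RL_prim n a b F \<in> DHK a b"
          using parts(1) L F by blast
      qed
      subgoal by (rule parts(2))
      subgoal by (rule parts(3))
      subgoal by (rule parts(4))
      subgoal
      proof -
        have "\<not> 1 \<le> n" using f by auto
        thus ?thesis by blast
      qed
      done
  next
    case g
    note parts = generic_parts[where T = "RL_prim n a b" and K = "(b - a) * ((1 + (b - a) powr (n - 1)) / Gamma n)",
        OF ab refl ge1_lin[OF ab g] ge1_bnd[OF ab g] ge1_DHK[OF ab g]]
    have I: "\<forall>F\<in>DHK a b. RL_fun n a F integrable_on {a..b}" using ge1_int[OF ab g] by blast
    have IV: "\<forall>F\<in>DHK a b. \<forall>gs::nat \<Rightarrow> real \<Rightarrow> real.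
          (\<forall>k. gs k absolutely_integrable_on {a..b}) \<and>
          (\<lambda>k. alex_norm a b (\<lambda>x. prim a (gs k) x - F x)) \<longlonglongrightarrow> 0
          \<longrightarrow> (\<lambda>k. alex_norm a b (\<lambda>x. prim a (RL_L1 n a (gs k)) x - RL_prim n a b F x)) \<longlonglongrightarrow> 0
            \<and> uniform_limit {a..b} (\<lambda>k. RL_L1 n a (gs k)) (RL_fun n a F) sequentially"
      using ge1_iv[OF ab g] by blast
    show ?thesis
      apply (intro conjI)
      subgoal
      proof
        fix F assume F: "F \<in> DHK a b"
        have "\<not> (0 < n \<and> n < 1)" using g by auto
        thus "(1 \<le> n \<longrightarrow> RL_fun n a F integrable_on {a..b}) \<and>
          (0 < n \<and> n < 1 \<longrightarrow> (\<exists>P. RL_limit n a b F P)) \<and> RL_prim n a b F \<in> DHK a b"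
          using parts(1) I F by blast
      qed
      subgoal by (rule parts(2))
      subgoal by (rule parts(3))
      subgoal by (rule parts(4))
      subgoal using IV by (intro impI)
      done
  qed
qed

end
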